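(* Consider the distributed estimation setting described in the context, with $n$ agents, $M$ fixed features, $c$ measurements per agent per time step, network matrix $\mathbf{P}=\mathbf{I}_n-\alpha\mathbf{L}$, and each agent $i$ running $$\hat{\boldsymbol{\theta}}_{i,t+1}=\sum_{j=1}^n \mathbf{P}_{ij}\hat{\boldsymbol{\theta}}_{j,t}+\alpha\,\mathbf{H}_{i,t}^\top(\mathbf{y}_{i,t}-\mathbf{H}_{i,t}\hat{\boldsymbol{\theta}}_{i,t})$$ from initial estimates with finite second moments. Let $\mathbf{e}_t=[\mathbf{e}_{1,t}^\top,\dots,\mathbf{e}_{n,t}^\top]^\top$ with $\mathbf{e}_{i,t}=\hat{\boldsymbol{\theta}}_{i,t}-\boldsymbol{\theta}$, and let $\mathbf{B}=\mathbf{L}\otimes\mathbf{I}_M+c\,\mathrm{diag}[\mathbf{G}_1,\dots,\mathbf{G}_n]$. If $$\alpha<\frac{2\lambda_{Mn}(\mathbf{B})}{(\lambda_1(\mathbf{L})+2Mc)^2},$$ then $$\limsup_{t\to\infty}\mathbb{E}[\mathbf{e}_t^\top\mathbf{e}_t]\le\frac{2\alpha cMn\sigma_v^2}{2\lambda_{Mn}(\mathbf{B})-\alpha(\lambda_1(\mathbf{L})+2Mc)^2},$$ where the expectation is over the inputs and the observation noise.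
   Context: Setting: an unknown parameter $\boldsymbol{\theta}\in\mathbb{R}^M$. Fixed features $\boldsymbol{\omega}_1,\dots,\boldsymbol{\omega}_M$ and a feature map $\phi(\mathbf{x},\boldsymbol{\omega})$ with $\sup_{\mathbf{x},\boldsymbol{\omega}}|\phi(\mathbf{x},\boldsymbol{\omega})|\le\sqrt2$. There are $n$ agents; at each time $t$, agent $i\in\{1,\dots,n\}$ receives $c$ random inputs $\mathbf{x}_{1,i,t},\dots,\mathbf{x}_{c,i,t}\in\mathbb{R}^d$ and forms $\mathbf{H}_{i,t}\in\mathbb{R}^{c\times M}$ with $(j,l)$ entry $\phi(\mathbf{x}_{j,i,t},\boldsymbol{\omega}_l)$, and observes $\mathbf{y}_{i,t}=\mathbf{H}_{i,t}\boldsymbol{\theta}+\mathbf{v}_{i,t}$ with $\mathbb{E}[\mathbf{v}_{i,t}]=\mathbf{0}$, $\mathbb{E}[\mathbf{v}_{i,t}\mathbf{v}_{i,t}^\top]=\sigma_v^2\mathbf{I}_c$. The inputs and noise at time $t$ are independent of each other and of everything generated before time $t$, and the input distributions do not depend on $t$. Define $\mathbf{G}_i=c^{-1}\mathbb{E}[\mathbf{H}_{i,t}^\top\mathbf{H}_{i,t}]$; each $\mathbf{G}_i$ has rank strictly less than $M$ while $\sum_{i=1}^n\mathbf{G}_i$ is invertible. Network: the communication graph is undirected and connected, $\mathbf{L}$ is its graph Laplacian, $\mathbf{P}=\mathbf{I}_n-\alpha\mathbf{L}$ with $0<\alpha<1/\mathrm{deg}$ ($\mathrm{deg}$ = maximum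 degree); the same $\alpha$ is the step size. $\lambda_i(\cdot)$ denotes the $i$-th largest eigenvalue, so $\lambda_{Mn}(\mathbf{B})$ is the smallest eigenvalue of the $Mn\times Mn$ matrix $\mathbf{B}$ and $\lambda_1(\mathbf{L})$ the largest eigenvalue of $\mathbf{L}$. *)

theory Defs
  imports "HOL-Probability.Probability"
begin

text \<open>Real eigenvalues of a square real matrix (indexed by a finite type).
  For a symmetric matrix all eigenvalues are real, so this is the full spectrum.\<close>
definition eigvals :: "real^'k^'k \<Rightarrow> real set" where
  "eigvals A = {lam. \<exists>x. x \<noteq> 0 \<and> A *v x = lam *\<^sub>R x}"

text \<open>Smallest eigenvalue (lambda_N for an N x N matrix) and largest eigenvalue (lambda_1).\<close>
definition lam_min :: "real^'k^'k \<Rightarrow> real" where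
  "lam_min A = Min (eigvals A)"

definition lam_max :: "real^'k^'k \<Rightarrow> real" where
  "lam_max A = Max (eigvals A)"

definition degree :: "('n \<Rightarrow> 'n \<Rightarrow> bool) \<Rightarrow> 'n \<Rightarrow> nat" where
  "degree E i = card {j. E i j}"

definition max_degree :: "('n::finite \<Rightarrow> 'n \<Rightarrow> bool) \<Rightarrow> nat" where
  "max_degree E = Max (range (degree E))"

definition laplacian :: "('n::finite \<Rightarrow> 'n \<Rightarrow> bool) \<Rightarrow> real^'n^'n" where
  "laplacian E = (\<chi> i j. if i = j then real (degree E i) else if E i j then -1 else 0)"

definition connected_graph :: "('n \<Rightarrow> 'n \<Rightarrow> bool) \<Rightarrow> bool" where
  "connected_graph E \<longleftrightarrow> (\<forall>i j. (i, j) \<in> {(a, b). E a b}\<^sup>*)"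

text \<open>Row j of the regressor matrix H_{i,t}: the vector (phi(x_{j,i,t}, omega_l))_l.\<close>
definition Hrow :: "(real^'d \<Rightarrow> real^'d \<Rightarrow> real) \<Rightarrow> ('m::finite \<Rightarrow> real^'d)
    \<Rightarrow> (nat \<Rightarrow> 'n \<Rightarrow> 'c \<Rightarrow> 'a \<Rightarrow> real^'d) \<Rightarrow> nat \<Rightarrow> 'n \<Rightarrow> 'c \<Rightarrow> 'a \<Rightarrow> real^'m" where
  "Hrow \<phi> feat X t i k \<omega> = (\<chi> l. \<phi> (X t i k \<omega>) (feat l))"

definition obs :: "(real^'d \<Rightarrow> real^'d \<Rightarrow> real) \<Rightarrow> ('m::finite \<Rightarrow> real^'d)
    \<Rightarrow> real^'m \<Rightarrow> (nat \<Rightarrow> 'n \<Rightarrow> 'c \<Rightarrow> 'a \<Rightarrow> real^'d) \<Rightarrow> (nat \<Rightarrow> 'n \<Rightarrow> 'c \<Rightarrow> 'a \<Rightarrow> real)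
    \<Rightarrow> nat \<Rightarrow> 'n \<Rightarrow> 'c \<Rightarrow> 'a \<Rightarrow> real" where
  "obs \<phi> feat \<theta> X v t i k \<omega> = Hrow \<phi> feat X t i k \<omega> \<bullet> \<theta> + v t i k \<omega>"

text \<open>The distributed estimates
  theta_{i,t+1} = sum_j P_ij theta_{j,t} + alpha H_{i,t}^T (y_{i,t} - H_{i,t} theta_{i,t}).
  Note H^T (y - H th) = sum_k (y_k - h_k . th) h_k with h_k the rows of H.\<close>
primrec est :: "real^'n^'n \<Rightarrow> real \<Rightarrow> (real^'d \<Rightarrow> real^'d \<Rightarrow> real) \<Rightarrow> ('m::finite \<Rightarrow> real^'d)
    \<Rightarrow> real^'m \<Rightarrow> ('n::finite \<Rightarrow> 'a \<Rightarrow> real^'m)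
    \<Rightarrow> (nat \<Rightarrow> 'n \<Rightarrow> 'c::finite \<Rightarrow> 'a \<Rightarrow> real^'d) \<Rightarrow> (nat \<Rightarrow> 'n \<Rightarrow> 'c \<Rightarrow> 'a \<Rightarrow> real)
    \<Rightarrow> nat \<Rightarrow> 'n \<Rightarrow> 'a \<Rightarrow> real^'m" where
  "est P \<alpha> \<phi> feat \<theta> \<theta>0 X v 0 i \<omega> = \<theta>0 i \<omega>"
| "est P \<alpha> \<phi> feat \<theta> \<theta>0 X v (Suc t) i \<omega> =
     (\<Sum>j\<in>UNIV. P $ i $ j *\<^sub>R est P \<alpha> \<phi> feat \<theta> \<theta>0 X v t j \<omega>)
     + \<alpha> *\<^sub>R (\<Sum>k\<in>UNIV. (obs \<phi> feat \<theta> X v t i k \<omega>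
                 - Hrow \<phi> feat X t i k \<omega> \<bullet> est P \<alpha> \<phi> feat \<theta> \<theta>0 X v t i \<omega>)
                 *\<^sub>R Hrow \<phi> feat X t i k \<omega>)"

definition gen_events :: "'a measure \<Rightarrow> ('a \<Rightarrow> 'b::topological_space) \<Rightarrow> 'a set set" where
  "gen_events M f = {f -` A \<inter> space M | A. A \<in> sets borel}"

definition past_events :: "'a measure \<Rightarrow> ('n \<Rightarrow> 'a \<Rightarrow> real^'m::finite)
    \<Rightarrow> (nat \<Rightarrow> 'n \<Rightarrow> 'c \<Rightarrow> 'a \<Rightarrow> real^'d) \<Rightarrow> (nat \<Rightarrow> 'n \<Rightarrow> 'c \<Rightarrow> 'a \<Rightarrow> real)
    \<Rightarrow> nat \<Rightarrow> 'a set set" where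
  "past_events M \<theta>0 X v t = sigma_sets (space M)
     ((\<Union>i. gen_events M (\<theta>0 i))
      \<union> (\<Union>s\<in>{..<t}. \<Union>i. \<Union>k. gen_events M (X s i k) \<union> gen_events M (v s i k)))"

definition input_events :: "'a measure \<Rightarrow> (nat \<Rightarrow> 'n \<Rightarrow> 'c \<Rightarrow> 'a \<Rightarrow> real^'d) \<Rightarrow> nat \<Rightarrow> 'a set set" where
  "input_events M X t = sigma_sets (space M) (\<Union>i. \<Union>k. gen_events M (X t i k))"

definition noise_events :: "'a measure \<Rightarrow> (nat \<Rightarrow> 'n \<Rightarrow> 'c \<Rightarrow> 'a \<Rightarrow> real) \<Rightarrow> nat \<Rightarrow> 'a set set" where
  "noise_events M v t = sigma_sets (space M) (\<Union>i. \<Union>k. gen_events M (v t i k))"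

text \<open>G_i = c^{-1} E[H_{i,t}^T H_{i,t}] (independent of t; taken at t = 0).\<close>
definition Gmat :: "'a measure \<Rightarrow> (real^'d \<Rightarrow> real^'d \<Rightarrow> real) \<Rightarrow> ('m::finite \<Rightarrow> real^'d)
    \<Rightarrow> (nat \<Rightarrow> 'n \<Rightarrow> 'c::finite \<Rightarrow> 'a \<Rightarrow> real^'d) \<Rightarrow> 'n \<Rightarrow> real^'m^'m" where
  "Gmat M \<phi> feat X i = (\<chi> l l'. (1 / real CARD('c)) *
      integral\<^sup>L M (\<lambda>\<omega>. \<Sum>k\<in>UNIV. \<phi> (X 0 i k \<omega>) (feat l) * \<phi> (X 0 i k \<omega>) (feat l')))"

text \<open>B = L (x) I_M + c diag[G_1,...,G_n], indexed by pairs (agent, feature).\<close>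
definition Bmat :: "real^'n^'n \<Rightarrow> real \<Rightarrow> ('n::finite \<Rightarrow> real^'m^'m) \<Rightarrow> real^('n \<times> 'm::finite)^('n \<times> 'm)" where
  "Bmat L c G = (\<chi> p q. L $ fst p $ fst q * (if snd p = snd q then 1 else 0)
                     + c * (if fst p = fst q then G (fst p) $ snd p $ snd q else 0))"

end

theory Submission
  imports Defs
begin

lemma quad_disc:
  fixes a b c :: real
  assumes h: "\<And>t. 0 \<le> a + 2*b*t + c*t^2" and c: "0 \<le> c"
  shows "b^2 \<le> a*c"
proof (cases "c = 0")
  case True
  have "b = 0"
  proof (rule ccontr)
    assume "b \<noteq> 0"
    have "0 \<le> a + 2*b*(-(\<bar>a\<bar>+1)/(2*b))" using h[of "-(\<bar>a\<bar>+1)/(2*b)"] True by simp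
    also have "\<dots> = a - (\<bar>a\<bar>+1)" using \<open>b \<noteq> 0\<close> by (simp add: field_simps)
    finally show False by linarith
  qed
  then show ?thesis using True by simp
next
  case False
  hence cp: "c > 0" using c by simp
  have "0 \<le> a + 2*b*(-b/c) + c*(-b/c)^2" by (rule h)
  also have "\<dots> = a - b^2/c" using cp by (simp add: field_simps power2_eq_square)
  finally have "b^2/c \<le> a" by simp
  thus ?thesis using cp by (simp add: field_simps mult.commute)
qed

lemma transpose_diff': "transpose (A - B) = transpose A - transpose (B::real^'k^'k)"
  by (simp add: transpose_def vec_eq_iff)
lemma mat_scale_mult: "(m *\<^sub>R mat 1) *v z = m *\<^sub>R (z::real^'k)"
  by (simp flip: scaleR_matrix_vector_assoc)
lemma neg_mat_mult: "(- A) *v z = - (A *v (z::real^'k))"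
  by (simp add: matrix_vector_mult_def vec_eq_iff sum_negf)
lemma transpose_neg': "transpose (- A) = - transpose (A::real^'k^'k)"
  by (simp add: transpose_def vec_eq_iff)

definition qf :: "real^'k^'k \<Rightarrow> real^'k \<Rightarrow> real" where
  "qf A x = x \<bullet> (A *v x)"

lemma sym_dot:
  fixes A :: "real^'k^'k"
  assumes "transpose A = A"
  shows "x \<bullet> (A *v y) = y \<bullet> (A *v x)"
proof -
  have "x \<bullet> (A *v y) = (x v* A) \<bullet> y" by (simp add: dot_lmul_matrix)
  also have "x v* A = transpose A *v x" by simp
  finally show ?thesis using assms by (simp add: inner_commute)
qed

lemma qf_add_scale:
  fixes A :: "real^'k^'k"
  assumes "transpose A = A"
  shows "qf A (x + t *\<^sub>R y) = qf A x + 2 * (y \<bullet> (A *v x)) * t + qf A y * t^2"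
proof -
  have "qf A (x + t *\<^sub>R y) = x \<bullet> (A *v x) + t * (x \<bullet> (A *v y)) + t * (y \<bullet> (A *v x)) + t*t*(y \<bullet> (A *v y))"
    unfolding qf_def by (simp add: matrix_vector_right_distrib matrix_vector_mult_scaleR
        inner_add_left inner_add_right algebra_simps)
  thus ?thesis using sym_dot[OF assms, of x y] unfolding qf_def by (simp add: power2_eq_square algebra_simps)
qed

lemma psd_cs:
  fixes A :: "real^'k^'k"
  assumes "transpose A = A" and psd: "\<And>z. 0 \<le> qf A z"
  shows "(y \<bullet> (A *v x))^2 \<le> qf A x * qf A y"
proof -
  have "\<And>t. 0 \<le> qf A x + 2 * (y \<bullet> (A *v x)) * t + qf A y * t^2"
  proof -
    fix t
    have "0 \<le> qf A (x + t *\<^sub>R y)" by (rule psd)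
    thus "0 \<le> qf A x + 2 * (y \<bullet> (A *v x)) * t + qf A y * t^2" by (simp only: qf_add_scale[OF assms(1)])
  qed
  thus ?thesis by (rule quad_disc) (rule psd)
qed

lemma psd_zero:
  fixes A :: "real^'k^'k"
  assumes "transpose A = A" and psd: "\<And>z. 0 \<le> qf A z" and "qf A x = 0"
  shows "A *v x = 0"
proof -
  have h: "((A *v x) \<bullet> (A *v x))^2 \<le> qf A x * qf A (A *v x)" by (rule psd_cs[OF assms(1,2)])
  hence "((A *v x) \<bullet> (A *v x))^2 \<le> 0" using assms(3) by simp
  hence "(A *v x) \<bullet> (A *v x) = 0" using zero_le_power2[of "(A *v x) \<bullet> (A *v x)"] by simp
  thus ?thesis by simp
qed

lemma eigvals_finite:
  fixes A :: "real^'k^'k"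
  assumes sym: "transpose A = A"
  shows "finite (eigvals A)"
proof -
  define f where "f lam = (SOME x. x \<noteq> 0 \<and> A *v x = lam *\<^sub>R x)" for lam
  have f: "f lam \<noteq> 0 \<and> A *v f lam = lam *\<^sub>R f lam" if "lam \<in> eigvals A" for lam
  proof -
    from that obtain x where "x \<noteq> 0 \<and> A *v x = lam *\<^sub>R x" unfolding eigvals_def by blast
    thus ?thesis unfolding f_def by (rule someI)
  qed
  have inj: "inj_on f (eigvals A)"
  proof (rule inj_onI)
    fix a b assume a: "a \<in> eigvals A" and b: "b \<in> eigvals A" and e: "f a = f b"
    have ea: "A *v f a = a *\<^sub>R f a" using f[OF a] by (rule conjunct2)
    have eb: "A *v f b = b *\<^sub>R f b" using f[OF b] by (rule conjunct2)
    have "a *\<^sub>R f a = A *v f a" by (rule ea[symmetric])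
    also have "\<dots> = A *v f b" by (simp only: e)
    also have "\<dots> = b *\<^sub>R f b" by (rule eb)
    also have "\<dots> = b *\<^sub>R f a" by (simp only: e)
    finally have "(a - b) *\<^sub>R f a = 0" by (simp only: scaleR_left_diff_distrib diff_self)
    moreover have "f a \<noteq> 0" using f[OF a] by (rule conjunct1)
    ultimately show "a = b" by simp
  qed
  have orth: "pairwise orthogonal (f ` eigvals A)"
    unfolding pairwise_def
  proof (intro ballI impI)
    fix u w assume u: "u \<in> f ` eigvals A" and w: "w \<in> f ` eigvals A" and ne: "u \<noteq> w"
    from u obtain a where a: "a \<in> eigvals A" and ua: "u = f a" by blast
    from w obtain b where b: "b \<in> eigvals A" and wb: "w = f b" by blast
    have "a \<noteq> b" using ne ua wb by blast
    have ea: "A *v f a = a *\<^sub>R f a" using f[OF a] by (rule conjunct2)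
    have eb: "A *v f b = b *\<^sub>R f b" using f[OF b] by (rule conjunct2)
    have "f a \<bullet> (A *v f b) = f b \<bullet> (A *v f a)" by (rule sym_dot[OF sym])
    hence "b * (f a \<bullet> f b) = a * (f b \<bullet> f a)" by (simp only: ea eb inner_scaleR_right)
    hence "b * (f a \<bullet> f b) = a * (f a \<bullet> f b)" by (simp only: inner_commute)
    hence "f a \<bullet> f b = 0" using \<open>a \<noteq> b\<close> by simp
    thus "orthogonal u w" by (simp add: orthogonal_def ua wb)
  qed
  have "0 \<notin> f ` eigvals A"
  proof
    assume "0 \<in> f ` eigvals A"
    then obtain a where "a \<in> eigvals A" "0 = f a" by blast
    thus False using f by metis
  qed
  hence "independent (f ` eigvals A)" by (rule pairwise_orthogonal_independent[OF orth])
  hence "finite (f ` eigvals A)" by (rule conjunct1[OF independent_bound])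
  thus ?thesis using inj by (rule finite_imageD)
qed

lemma rayleigh_min:
  fixes A :: "real^'k^'k"
  assumes sym: "transpose A = A"
  shows "\<exists>m \<in> eigvals A. \<forall>x. m * (norm x)^2 \<le> qf A x"
proof -
  have cont: "continuous_on (sphere 0 1) (qf A)"
    unfolding qf_def by (intro continuous_intros linear_continuous_on bounded_linear_intros)
  have ne: "sphere (0::real^'k) 1 \<noteq> {}" by simp
  obtain x0 where x0: "x0 \<in> sphere 0 1" and mn: "\<And>y. y \<in> sphere 0 1 \<Longrightarrow> qf A x0 \<le> qf A y"
    using continuous_attains_inf[OF compact_sphere ne cont] by blast
  define m where "m = qf A x0"
  have bound: "m * (norm x)^2 \<le> qf A x" for x
  proof (cases "x = 0")
    case True thus ?thesis by (simp add: qf_def)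
  next
    case False
    define y where "y = (1/norm x) *\<^sub>R x"
    have "y \<in> sphere 0 1" using False by (simp add: y_def)
    hence "m \<le> qf A y" using mn m_def by simp
    also have "qf A y = qf A x / (norm x)^2"
      by (simp add: y_def qf_def matrix_vector_mult_scaleR power2_eq_square)
    finally show ?thesis using False by (simp add: field_simps)
  qed
  define C where "C = A - m *\<^sub>R mat 1"
  have symC: "transpose C = C" using sym by (simp add: C_def transpose_diff' transpose_scalar transpose_mat)
  have qC: "qf C z = qf A z - m * (norm z)^2" for z
    by (simp add: C_def qf_def matrix_vector_mult_diff_rdistrib inner_diff_right power2_norm_eq_inner mat_scale_mult)
  have psd: "0 \<le> qf C z" for z using bound[of z] qC by simp
  have "qf C x0 = 0" using qC x0 m_def by simp
  hence "C *v x0 = 0" by (rule psd_zero[OF symC psd])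
  hence "A *v x0 = m *\<^sub>R x0" by (simp add: C_def matrix_vector_mult_diff_rdistrib mat_scale_mult)
  moreover have "x0 \<noteq> 0" using x0 by auto
  ultimately have "m \<in> eigvals A" unfolding eigvals_def by auto
  thus ?thesis using bound by blast
qed

lemma lam_min_le:
  fixes A :: "real^'k^'k"
  assumes sym: "transpose A = A"
  shows "lam_min A * (norm x)^2 \<le> qf A x"
proof -
  obtain m where m: "m \<in> eigvals A" "\<And>x. m * (norm x)^2 \<le> qf A x" using rayleigh_min[OF sym] by blast
  have "lam_min A \<le> m" unfolding lam_min_def using m(1) eigvals_finite[OF sym] by simp
  hence "lam_min A * (norm x)^2 \<le> m * (norm x)^2" by (simp add: mult_right_mono)
  thus ?thesis using m(2)[of x] by linarith
qed

lemma lam_max_ge: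
  fixes A :: "real^'k^'k"
  assumes sym: "transpose A = A"
  shows "qf A x \<le> lam_max A * (norm x)^2"
proof -
  have symm: "transpose (-A) = -A" using sym by (simp add: transpose_neg')
  obtain m where m: "m \<in> eigvals (-A)" "\<And>x. m * (norm x)^2 \<le> qf (-A) x" using rayleigh_min[OF symm] by blast
  have "-m \<in> eigvals A"
  proof -
    obtain x where "x \<noteq> 0" "(-A) *v x = m *\<^sub>R x" using m(1) unfolding eigvals_def by blast
    hence "x \<noteq> 0 \<and> A *v x = (-m) *\<^sub>R x" by (simp add: neg_mat_mult) (metis minus_minus)
    thus ?thesis unfolding eigvals_def by blast
  qed
  moreover have "finite (eigvals A)" by (rule eigvals_finite[OF sym])
  ultimately have "-m \<le> lam_max A" unfolding lam_max_def by simp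
  have "qf (-A) x = - qf A x" by (simp add: qf_def neg_mat_mult)
  hence "qf A x \<le> -m * (norm x)^2" using m(2)[of x] by simp
  also have "\<dots> \<le> lam_max A * (norm x)^2" using mult_right_mono[OF \<open>-m \<le> lam_max A\<close>, of "(norm x)^2"] by simp
  finally show ?thesis .
qed

lemma psd_norm_bound:
  fixes A :: "real^'k^'k"
  assumes sym: "transpose A = A" and psd: "\<And>z. 0 \<le> qf A z"
  shows "norm (A *v x) \<le> lam_max A * norm x" and "0 \<le> lam_max A"
proof -
  have lm0: "0 \<le> lam_max A"
  proof -
    obtain z :: "real^'k" where "z \<noteq> 0" using zero_neq_one vec_eq_iff by (metis vector_one_nth)
    have "0 \<le> lam_max A * (norm z)^2" using lam_max_ge[OF sym, of z] psd[of z] by linarith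
    thus ?thesis using \<open>z \<noteq> 0\<close> by (simp add: zero_le_mult_iff)
  qed
  show "0 \<le> lam_max A" by (rule lm0)
  define y where "y = A *v x"
  have "(y \<bullet> y)^2 \<le> qf A x * qf A y" using psd_cs[OF sym psd, where x=x and y=y] by (simp only: y_def)
  also have "\<dots> \<le> (lam_max A * (norm x)^2) * (lam_max A * (norm y)^2)"
    by (intro mult_mono lam_max_ge[OF sym] psd) (use lm0 in auto)
  finally have h4: "((norm y)^2)^2 \<le> (lam_max A * (norm x)^2) * (lam_max A * (norm y)^2)"
    by (simp only: power2_norm_eq_inner)
  have "(norm y)^2 \<le> (lam_max A * norm x)^2"
  proof (cases "norm y = 0")
    case False
    have "(norm y)^2 * (norm y)^2 \<le> (lam_max A * norm x)^2 * (norm y)^2" using h4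
      by (simp add: power2_eq_square mult_ac)
    thus ?thesis by (rule mult_right_le_imp_le) (use False in simp)
  qed simp
  thus "norm (A *v x) \<le> lam_max A * norm x" unfolding y_def using lm0
    by (meson norm_ge_zero power2_le_imp_le zero_le_mult_iff)
qed

lemma sum_UNIV_prod: "(\<Sum>p\<in>(UNIV::('a::finite \<times> 'b::finite) set). f p) = (\<Sum>i\<in>UNIV. \<Sum>l\<in>UNIV. f (i,l))"
  by (simp add: sum.cartesian_product)

lemma norm_sq_vec: "(norm (x::real^'k))^2 = (\<Sum>i\<in>UNIV. (x$i)^2)"
  unfolding power2_norm_eq_inner inner_vec_def by (simp add: power2_eq_square)

lemma inner_vec_sum: "(x::real^'k) \<bullet> y = (\<Sum>i\<in>UNIV. x$i * y$i)"
  by (simp add: inner_vec_def)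

lemma lap_sym:
  assumes "\<And>i j. E i j = E j i"
  shows "transpose (laplacian E) = laplacian E"
  unfolding laplacian_def transpose_def using assms by (simp add: vec_eq_iff)

lemma degree_sum: fixes E :: "'n::finite \<Rightarrow> 'n \<Rightarrow> bool" shows "real (degree E i) = (\<Sum>j\<in>UNIV. if E i j then 1 else (0::real))"
  unfolding degree_def using sum.inter_filter[of UNIV "\<lambda>_. 1::real" "E i"] by simp

lemma lap_apply:
  fixes E :: "'n::finite \<Rightarrow> 'n \<Rightarrow> bool"
  assumes irr: "\<And>i. \<not> E i i"
  shows "(laplacian E *v x) $ i = (\<Sum>j\<in>UNIV. if E i j then x$i - x$j else 0)"
proof -
  have entry: "laplacian E $ i $ j = (if i = j then real (degree E i) else 0) - (if E i j then 1 else 0)" for j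
    unfolding laplacian_def using irr by (auto simp: irr)
  have "(laplacian E *v x) $ i = (\<Sum>j\<in>UNIV. laplacian E $ i $ j * x$j)"
    by (simp add: matrix_vector_mult_def)
  also have "\<dots> = (\<Sum>j\<in>UNIV. (if i = j then real (degree E i) * x$j else 0) - (if E i j then x$j else 0))"
    by (rule sum.cong) (auto simp: entry irr)
  also have "\<dots> = real (degree E i) * x$i - (\<Sum>j\<in>UNIV. if E i j then x$j else 0)"
    by (simp add: sum_subtractf)
  also have "real (degree E i) * x$i = (\<Sum>j\<in>UNIV. if E i j then x$i else 0)"
    by (auto simp: degree_sum sum_distrib_right intro!: sum.cong)
  also have "(\<Sum>j\<in>UNIV. if E i j then x$i else 0) - (\<Sum>j\<in>UNIV. if E i j then x$j else 0)
      = (\<Sum>j\<in>UNIV. if E i j then x$i - x$j else 0)"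
    by (simp add: sum_subtractf[symmetric]) (auto intro!: sum.cong)
  finally show ?thesis .
qed

lemma lap_rowsum:
  fixes E :: "'n::finite \<Rightarrow> 'n \<Rightarrow> bool"
  assumes irr: "\<And>i. \<not> E i i"
  shows "(\<Sum>j\<in>UNIV. laplacian E $ i $ j) = 0"
proof -
  have entry: "laplacian E $ i $ j = (if i = j then real (degree E i) else 0) - (if E i j then 1 else 0)" for j
    unfolding laplacian_def using irr by (auto simp: irr)
  have "(\<Sum>j\<in>UNIV. laplacian E $ i $ j) = (\<Sum>j\<in>UNIV. (if i = j then real (degree E i) else 0)) - (\<Sum>j\<in>UNIV. if E i j then 1 else 0)"
    unfolding entry by (simp add: sum_subtractf)
  also have "\<dots> = 0" by (simp add: degree_sum)
  finally show ?thesis .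
qed

lemma lap_psd:
  fixes E :: "'n::finite \<Rightarrow> 'n \<Rightarrow> bool"
  assumes sym: "\<And>i j. E i j = E j i" and irr: "\<And>i. \<not> E i i"
  shows "0 \<le> qf (laplacian E) x"
proof -
  define S where "S = (\<Sum>i\<in>UNIV. \<Sum>j\<in>UNIV. if E i j then (x$i)^2 - x$i * x$j else 0)"
  have q: "qf (laplacian E) x = S"
    unfolding qf_def inner_vec_sum lap_apply[OF irr] S_def
    by (simp add: sum_distrib_left if_distrib right_diff_distrib power2_eq_square cong: if_cong)
  have "S = (\<Sum>j\<in>UNIV. \<Sum>i\<in>UNIV. if E i j then (x$i)^2 - x$i * x$j else 0)"
    unfolding S_def by (rule sum.swap)
  also have "\<dots> = (\<Sum>i\<in>UNIV. \<Sum>j\<in>UNIV. if E i j then (x$j)^2 - x$i * x$j else 0)"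
    by (intro sum.cong refl) (simp add: sym[of _ _] mult.commute)
  finally have S2: "S = \<dots>" .
  have "2 * S = S + S" by simp
  also have "\<dots> = (\<Sum>i\<in>UNIV. \<Sum>j\<in>UNIV. (if E i j then (x$i)^2 - x$i * x$j else 0) + (if E i j then (x$j)^2 - x$i * x$j else 0))"
    by (subst (2) S2) (simp add: S_def sum.distrib)
  also have "\<dots> = (\<Sum>i\<in>UNIV. \<Sum>j\<in>UNIV. if E i j then (x$i - x$j)^2 else 0)"
    by (intro sum.cong refl) (simp add: power2_eq_square algebra_simps)
  also have "\<dots> \<ge> 0" by (intro sum_nonneg) auto
  finally show ?thesis using q by simp
qed

definition Lop :: "real^'n^'n \<Rightarrow> ('n::finite \<Rightarrow> real^'m) \<Rightarrow> 'n \<Rightarrow> real^'m" where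
  "Lop L e i = (\<Sum>j\<in>UNIV. L$i$j *\<^sub>R e j)"

definition col :: "('n::finite \<Rightarrow> real^'m) \<Rightarrow> 'm \<Rightarrow> real^'n" where
  "col e l = (\<chi> j. e j $ l)"

definition stack :: "('n::finite \<Rightarrow> real^'m::finite) \<Rightarrow> real^('n \<times> 'm)" where
  "stack e = (\<chi> p. e (fst p) $ snd p)"

lemma d1: "(\<Sum>l'\<in>(UNIV::'m::finite set). (f l' :: real) * (if l = l' then 1 else 0) * g l') = f l * g l"
proof -
  have "(\<Sum>l'\<in>(UNIV::'m::finite set). (f l' :: real) * (if l = l' then 1 else 0) * g l') = (\<Sum>l'\<in>UNIV. if l = l' then f l' * g l' else 0)"
    by (rule sum.cong) auto
  thus ?thesis by simp
qed
lemma d2: "(\<Sum>i'\<in>(UNIV::'n::finite set). c * (if i = i' then (G i' :: real) else 0) * g i') = c * G i * g i"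
proof -
  have "(\<Sum>i'\<in>(UNIV::'n::finite set). c * (if i = i' then (G i' :: real) else 0) * g i') = (\<Sum>i'\<in>UNIV. if i = i' then c * G i' * g i' else 0)"
    by (rule sum.cong) auto
  thus ?thesis by simp
qed

lemma Lop_comp: "Lop L e i $ l = (L *v col e l) $ i"
  by (simp add: Lop_def col_def matrix_vector_mult_def)

lemma sum_norm_col: "(\<Sum>i\<in>UNIV. (norm (e i))^2) = (\<Sum>l\<in>UNIV. (norm (col e l))^2)"
  unfolding norm_sq_vec col_def vec_lambda_beta by (rule sum.swap)

lemma sum_norm_Lop: "(\<Sum>i\<in>UNIV. (norm (Lop L e i))^2) = (\<Sum>l\<in>UNIV. (norm (L *v col e l))^2)"
  unfolding norm_sq_vec Lop_comp by (rule sum.swap)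

lemma sum_inner_Lop: "(\<Sum>i\<in>UNIV. e i \<bullet> Lop L e i) = (\<Sum>l\<in>UNIV. qf L (col e l))"
  unfolding qf_def inner_vec_sum Lop_comp col_def vec_lambda_beta by (rule sum.swap)

lemma norm_stack: "(norm (stack e))^2 = (\<Sum>i\<in>UNIV. (norm (e i))^2)"
  unfolding norm_sq_vec stack_def by (simp add: sum_UNIV_prod)

lemma stack_add: "stack (\<lambda>i. a i + b i) = stack a + stack b"
  by (simp add: stack_def vec_eq_iff)

lemma Bmat_sym:
  assumes "transpose L = L" "\<And>i. transpose (G i) = G i"
  shows "transpose (Bmat L c G) = Bmat L c G"
proof -
  have L: "L $ i $ j = L $ j $ i" for i j using assms(1) by (metis transpose_def vec_lambda_beta)
  have G: "G k $ i $ j = G k $ j $ i" for k i j using assms(2) by (metis transpose_def vec_lambda_beta)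
  show ?thesis unfolding Bmat_def transpose_def by (simp add: vec_eq_iff L G)
qed

lemma qf_Bmat:
  "qf (Bmat L c G) (stack e) = (\<Sum>l\<in>UNIV. qf L (col e l)) + c * (\<Sum>i\<in>UNIV. e i \<bullet> (G i *v e i))"
proof -
  have row: "(Bmat L c G *v stack e) $ (i,l) = Lop L e i $ l + c * (G i *v e i) $ l" for i l
  proof -
    have "(Bmat L c G *v stack e) $ (i,l) = (\<Sum>i'\<in>UNIV. \<Sum>l'\<in>UNIV.
        L$i$i' * (if l = l' then 1 else 0) * e i' $ l' + c * (if i = i' then G i $ l $ l' else 0) * e i' $ l')"
      unfolding Bmat_def matrix_vector_mult_def stack_def sum_UNIV_prod vec_lambda_beta fst_conv snd_conv
      by (simp add: distrib_right)
    also have "\<dots> = (\<Sum>i'\<in>UNIV. \<Sum>l'\<in>UNIV. L$i$i' * (if l = l' then 1 else 0) * e i' $ l')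
        + (\<Sum>l'\<in>UNIV. \<Sum>i'\<in>UNIV. c * (if i = i' then G i $ l $ l' else 0) * e i' $ l')"
      unfolding sum.distrib by (subst (2) sum.swap) (rule refl)
    also have "\<dots> = (\<Sum>i'\<in>UNIV. L$i$i' * e i' $ l) + (\<Sum>l'\<in>UNIV. c * G i $ l $ l' * e i $ l')"
      by (simp only: d1 d2)
    also have "\<dots> = Lop L e i $ l + c * (G i *v e i) $ l"
      by (simp add: Lop_def matrix_vector_mult_def sum_distrib_left mult_ac)
    finally show ?thesis .
  qed
  have "qf (Bmat L c G) (stack e) = (\<Sum>i\<in>UNIV. \<Sum>l\<in>UNIV. e i $ l * (Lop L e i $ l + c * (G i *v e i) $ l))"
    unfolding qf_def inner_vec_sum sum_UNIV_prod row by (simp add: stack_def)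
  also have "\<dots> = (\<Sum>i\<in>UNIV. e i \<bullet> Lop L e i) + c * (\<Sum>i\<in>UNIV. e i \<bullet> (G i *v e i))"
    by (simp add: inner_vec_sum distrib_left sum.distrib sum_distrib_left mult_ac)
  finally show ?thesis by (simp add: sum_inner_Lop)
qed

lemmas bms = borel_measurable_add borel_measurable_sum borel_measurable_uminus borel_measurable_diff
  borel_measurable_times borel_measurable_scaleR borel_measurable_power borel_measurable_const

lemma abs_le_1_sq: "\<bar>x::real\<bar> \<le> 1 + x^2"
proof -
  have h: "0 \<le> (\<bar>x\<bar> - 1/2)^2" by simp
  have "(\<bar>x\<bar> - 1/2)^2 = x^2 - \<bar>x\<bar> + 1/4"
    by (simp add: power2_eq_square algebra_simps abs_mult_self_eq)
  thus ?thesis using h by linarith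
qed

lemma abs_mult_le_sq: "\<bar>(x::real) * y\<bar> \<le> x^2 + y^2"
proof -
  have h: "0 \<le> (\<bar>x\<bar> - \<bar>y\<bar>)^2" by simp
  have "(\<bar>x\<bar> - \<bar>y\<bar>)^2 = x^2 + y^2 - 2 * \<bar>x * y\<bar>"
    by (simp add: power2_eq_square algebra_simps abs_mult_self_eq abs_mult)
  hence "2 * \<bar>x * y\<bar> \<le> x^2 + y^2" using h by linarith
  moreover have "0 \<le> \<bar>x * y\<bar>" by simp
  ultimately show ?thesis by linarith
qed

context prob_space begin

definition sqi :: "('a \<Rightarrow> real) \<Rightarrow> bool" where
  "sqi f \<longleftrightarrow> f \<in> borel_measurable M \<and> integrable M (\<lambda>\<omega>. (f \<omega>)^2)"

definition bm :: "('a \<Rightarrow> real) \<Rightarrow> bool" where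
  "bm f \<longleftrightarrow> f \<in> borel_measurable M \<and> (\<exists>B. \<forall>\<omega>\<in>space M. \<bar>f \<omega>\<bar> \<le> B)"

lemma integrable_dom:
  fixes f g :: "'a \<Rightarrow> real"
  assumes "integrable M g" "f \<in> borel_measurable M" "\<And>\<omega>. \<omega> \<in> space M \<Longrightarrow> \<bar>f \<omega>\<bar> \<le> g \<omega>"
  shows "integrable M f"
proof (rule Bochner_Integration.integrable_bound[OF assms(1,2)])
  show "AE x in M. norm (f x) \<le> norm (g x)"
  proof (rule AE_I2)
    fix x assume "x \<in> space M"
    hence "\<bar>f x\<bar> \<le> g x" by (rule assms(3))
    also have "g x \<le> \<bar>g x\<bar>" by (rule abs_ge_self)
    finally show "norm (f x) \<le> norm (g x)" by simp
  qed
qed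

lemma sqi_int: "sqi f \<Longrightarrow> integrable M f"
proof -
  assume s: "sqi f"
  show ?thesis
  proof (rule integrable_dom[of "\<lambda>\<omega>. 1 + (f \<omega>)^2"])
    show "integrable M (\<lambda>\<omega>. 1 + (f \<omega>)^2)" using s unfolding sqi_def by simp
    show "f \<in> borel_measurable M" using s unfolding sqi_def by simp
    fix \<omega> show "\<bar>f \<omega>\<bar> \<le> 1 + (f \<omega>)^2" by (rule abs_le_1_sq)
  qed
qed

lemma sqi_prod: "sqi f \<Longrightarrow> sqi g \<Longrightarrow> integrable M (\<lambda>\<omega>. f \<omega> * g \<omega>)"
proof -
  assume f: "sqi f" and g: "sqi g"
  show ?thesis
  proof (rule integrable_dom[of "\<lambda>\<omega>. (f \<omega>)^2 + (g \<omega>)^2"])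
    show "integrable M (\<lambda>\<omega>. (f \<omega>)^2 + (g \<omega>)^2)" using f g unfolding sqi_def by simp
    show "(\<lambda>\<omega>. f \<omega> * g \<omega>) \<in> borel_measurable M" using f g unfolding sqi_def by (auto intro!: bms)
    fix \<omega>
    show "\<bar>f \<omega> * g \<omega>\<bar> \<le> (f \<omega>)^2 + (g \<omega>)^2" by (rule abs_mult_le_sq)
  qed
qed

lemma sqi_add: "sqi f \<Longrightarrow> sqi g \<Longrightarrow> sqi (\<lambda>\<omega>. f \<omega> + g \<omega>)"
proof -
  assume f: "sqi f" and g: "sqi g"
  have "integrable M (\<lambda>\<omega>. (f \<omega> + g \<omega>)^2)"
  proof (rule integrable_dom[of "\<lambda>\<omega>. 2 * (f \<omega>)^2 + 2 * (g \<omega>)^2"])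
    show "integrable M (\<lambda>\<omega>. 2 * (f \<omega>)^2 + 2 * (g \<omega>)^2)" using f g unfolding sqi_def by simp
    show "(\<lambda>\<omega>. (f \<omega> + g \<omega>)^2) \<in> borel_measurable M" using f g unfolding sqi_def by (auto intro!: bms)
    fix \<omega>
    have h: "0 \<le> (f \<omega> - g \<omega>)^2" by simp
    have "(f \<omega> + g \<omega>)^2 \<le> 2 * (f \<omega>)^2 + 2 * (g \<omega>)^2"
      using h by (simp add: power2_eq_square algebra_simps)
    thus "\<bar>(f \<omega> + g \<omega>)^2\<bar> \<le> 2 * (f \<omega>)^2 + 2 * (g \<omega>)^2" by simp
  qed
  thus ?thesis using f g unfolding sqi_def by (auto intro!: bms)
qed

lemma sqi_cmult: "sqi f \<Longrightarrow> sqi (\<lambda>\<omega>. c * f \<omega>)"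
  unfolding sqi_def by (auto simp: power_mult_distrib intro!: bms)

lemma sqi_neg: "sqi f \<Longrightarrow> sqi (\<lambda>\<omega>. - f \<omega>)"
  using sqi_cmult[of f "-1"] by simp

lemma sqi_diff: "sqi f \<Longrightarrow> sqi g \<Longrightarrow> sqi (\<lambda>\<omega>. f \<omega> - g \<omega>)"
  using sqi_add[OF _ sqi_neg, of f g] by simp

lemma sqi_const: "sqi (\<lambda>\<omega>. c)"
  unfolding sqi_def by simp

lemma sqi_sum: "(\<And>j. j \<in> J \<Longrightarrow> sqi (f j)) \<Longrightarrow> sqi (\<lambda>\<omega>. \<Sum>j\<in>J. f j \<omega>)"
proof (induction J rule: infinite_finite_induct)
  case (infinite A) thus ?case by (simp add: sqi_const)
next
  case empty thus ?case by (simp add: sqi_const)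
next
  case (insert x F) thus ?case by (simp add: sqi_add)
qed

lemma bm_sqi: "bm f \<Longrightarrow> sqi f"
proof -
  assume b: "bm f"
  then obtain B where B: "\<And>\<omega>. \<omega> \<in> space M \<Longrightarrow> \<bar>f \<omega>\<bar> \<le> B" unfolding bm_def by blast
  have "integrable M (\<lambda>\<omega>. (f \<omega>)^2)"
  proof (rule integrable_dom[of "\<lambda>_. B^2"])
    show "integrable M (\<lambda>_. B^2)" by simp
    show "(\<lambda>\<omega>. (f \<omega>)^2) \<in> borel_measurable M" using b unfolding bm_def by (auto intro!: bms)
    fix \<omega> assume w: "\<omega> \<in> space M"
    have "\<bar>f \<omega>\<bar>^2 \<le> B^2" by (rule power_mono[OF B[OF w]]) simp
    thus "\<bar>(f \<omega>)^2\<bar> \<le> B^2" by simp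
  qed
  thus ?thesis using b unfolding sqi_def bm_def by simp
qed

lemma bm_int: "bm f \<Longrightarrow> integrable M f"
  using bm_sqi sqi_int by blast

lemma bm_sqi_mult: "bm g \<Longrightarrow> sqi f \<Longrightarrow> sqi (\<lambda>\<omega>. g \<omega> * f \<omega>)"
proof -
  assume g: "bm g" and f: "sqi f"
  then obtain B where B: "\<And>\<omega>. \<omega> \<in> space M \<Longrightarrow> \<bar>g \<omega>\<bar> \<le> B" unfolding bm_def by blast
  have "integrable M (\<lambda>\<omega>. (g \<omega> * f \<omega>)^2)"
  proof (rule integrable_dom[of "\<lambda>\<omega>. B^2 * (f \<omega>)^2"])
    show "integrable M (\<lambda>\<omega>. B^2 * (f \<omega>)^2)" using f unfolding sqi_def by simp
    show "(\<lambda>\<omega>. (g \<omega> * f \<omega>)^2) \<in> borel_measurable M" using f g unfolding sqi_def bm_def by (auto intro!: bms)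
    fix \<omega> assume w: "\<omega> \<in> space M"
    have "\<bar>g \<omega>\<bar>^2 \<le> B^2" by (rule power_mono[OF B[OF w]]) simp
    hence "(g \<omega>)^2 \<le> B^2" by simp
    thus "\<bar>(g \<omega> * f \<omega>)^2\<bar> \<le> B^2 * (f \<omega>)^2" by (simp add: power_mult_distrib mult_right_mono)
  qed
  thus ?thesis using f g unfolding sqi_def bm_def by (auto intro!: bms)
qed

lemma bm_mult: "bm f \<Longrightarrow> bm g \<Longrightarrow> bm (\<lambda>\<omega>. f \<omega> * g \<omega>)"
proof -
  assume f: "bm f" and g: "bm g"
  then obtain A B where A: "\<And>\<omega>. \<omega> \<in> space M \<Longrightarrow> \<bar>f \<omega>\<bar> \<le> A" and B: "\<And>\<omega>. \<omega> \<in> space M \<Longrightarrow> \<bar>g \<omega>\<bar> \<le> B"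
    unfolding bm_def by blast
  have "\<bar>f \<omega> * g \<omega>\<bar> \<le> A * B" if "\<omega> \<in> space M" for \<omega>
    unfolding abs_mult
    by (rule mult_mono) (use A[OF that] B[OF that] abs_ge_zero[of "f \<omega>"] abs_ge_zero[of "g \<omega>"] in linarith)+
  thus ?thesis using f g unfolding bm_def by (auto intro!: bms)
qed

lemma bm_add: "bm f \<Longrightarrow> bm g \<Longrightarrow> bm (\<lambda>\<omega>. f \<omega> + g \<omega>)"
proof -
  assume f: "bm f" and g: "bm g"
  then obtain A B where A: "\<And>\<omega>. \<omega> \<in> space M \<Longrightarrow> \<bar>f \<omega>\<bar> \<le> A" and B: "\<And>\<omega>. \<omega> \<in> space M \<Longrightarrow> \<bar>g \<omega>\<bar> \<le> B"
    unfolding bm_def by blast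
  have "\<bar>f \<omega> + g \<omega>\<bar> \<le> A + B" if "\<omega> \<in> space M" for \<omega>
    using A[OF that] B[OF that] by linarith
  thus ?thesis using f g unfolding bm_def by (auto intro!: bms)
qed

lemma bm_const: "bm (\<lambda>\<omega>. c)"
  unfolding bm_def by auto

lemma bm_sum: "(\<And>j. j \<in> J \<Longrightarrow> bm (f j)) \<Longrightarrow> bm (\<lambda>\<omega>. \<Sum>j\<in>J. f j \<omega>)"
proof (induction J rule: infinite_finite_induct)
  case (infinite A) thus ?case by (simp add: bm_const)
next
  case empty thus ?case by (simp add: bm_const)
next
  case (insert x F) thus ?case by (simp add: bm_add)
qed

definition sqv :: "('a \<Rightarrow> real^'k) \<Rightarrow> bool" where
  "sqv x \<longleftrightarrow> (\<forall>l. sqi (\<lambda>\<omega>. x \<omega> $ l))"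

definition bmv :: "('a \<Rightarrow> real^'k) \<Rightarrow> bool" where
  "bmv x \<longleftrightarrow> (\<forall>l. bm (\<lambda>\<omega>. x \<omega> $ l))"

lemma sqv_add: "sqv x \<Longrightarrow> sqv y \<Longrightarrow> sqv (\<lambda>\<omega>. x \<omega> + y \<omega>)"
  unfolding sqv_def by (simp add: sqi_add)

lemma sqv_diff: "sqv x \<Longrightarrow> sqv y \<Longrightarrow> sqv (\<lambda>\<omega>. x \<omega> - y \<omega>)"
  unfolding sqv_def by (simp add: sqi_diff)

lemma sqv_scale: "sqv x \<Longrightarrow> sqv (\<lambda>\<omega>. c *\<^sub>R x \<omega>)"
  unfolding sqv_def by (simp add: sqi_cmult)

lemma sqv_sum: "(\<And>j. j \<in> J \<Longrightarrow> sqv (f j)) \<Longrightarrow> sqv (\<lambda>\<omega>. \<Sum>j\<in>J. f j \<omega>)"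
  unfolding sqv_def by (simp add: sum_component sqi_sum)

lemma sqv_const: "sqv (\<lambda>\<omega>. c)"
  unfolding sqv_def by (simp add: sqi_const)

lemma sqv_smult: "sqi f \<Longrightarrow> bmv c \<Longrightarrow> sqv (\<lambda>\<omega>. f \<omega> *\<^sub>R c \<omega>)"
  unfolding sqv_def bmv_def
proof (intro allI)
  fix l assume f: "sqi f" and c: "\<forall>l. bm (\<lambda>\<omega>. c \<omega> $ l)"
  have "sqi (\<lambda>\<omega>. c \<omega> $ l * f \<omega>)" using c f by (intro bm_sqi_mult) auto
  thus "sqi (\<lambda>\<omega>. (f \<omega> *\<^sub>R c \<omega>) $ l)" by (simp add: mult.commute)
qed

lemma sqv_iscale:
  assumes b: "bmv b" and x: "sqv x" and c: "bmv c"
  shows "sqv (\<lambda>\<omega>. (b \<omega> \<bullet> x \<omega>) *\<^sub>R c \<omega>)"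
  unfolding sqv_def
proof
  fix l
  have eq: "((b \<omega> \<bullet> x \<omega>) *\<^sub>R c \<omega>) $ l = (\<Sum>l'\<in>UNIV. (b \<omega> $ l' * c \<omega> $ l) * x \<omega> $ l')" for \<omega>
    by (simp add: inner_vec_sum sum_distrib_left sum_distrib_right mult_ac)
  show "sqi (\<lambda>\<omega>. ((b \<omega> \<bullet> x \<omega>) *\<^sub>R c \<omega>) $ l)"
    unfolding eq using b c x unfolding bmv_def sqv_def
    by (intro sqi_sum bm_sqi_mult bm_mult) auto
qed

lemma int_inner: "sqv x \<Longrightarrow> sqv y \<Longrightarrow> integrable M (\<lambda>\<omega>. x \<omega> \<bullet> y \<omega>)"
  unfolding inner_vec_sum sqv_def by (intro Bochner_Integration.integrable_sum sqi_prod) auto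

lemma int_norm2: "sqv x \<Longrightarrow> integrable M (\<lambda>\<omega>. (norm (x \<omega>))^2)"
  unfolding power2_norm_eq_inner by (rule int_inner)

lemma bmv_sqv: "bmv x \<Longrightarrow> sqv x"
  unfolding bmv_def sqv_def by (simp add: bm_sqi)

end

definition mv :: "'a measure \<Rightarrow> ('a \<Rightarrow> real^'k) \<Rightarrow> bool" where
  "mv F x \<longleftrightarrow> (\<forall>l. (\<lambda>\<omega>. x \<omega> $ l) \<in> borel_measurable F)"

lemma mv_add: "mv F x \<Longrightarrow> mv F y \<Longrightarrow> mv F (\<lambda>\<omega>. x \<omega> + y \<omega>)"
  unfolding mv_def by (auto intro!: bms)

lemma mv_diff: "mv F x \<Longrightarrow> mv F y \<Longrightarrow> mv F (\<lambda>\<omega>. x \<omega> - y \<omega>)"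
  unfolding mv_def by (auto intro!: bms)

lemma mv_scale: "mv F x \<Longrightarrow> mv F (\<lambda>\<omega>. c *\<^sub>R x \<omega>)"
  unfolding mv_def by (auto intro!: bms)

lemma mv_sum: "(\<And>j. j \<in> J \<Longrightarrow> mv F (f j)) \<Longrightarrow> mv F (\<lambda>\<omega>. \<Sum>j\<in>J. f j \<omega>)"
  unfolding mv_def by (auto simp: sum_component intro!: bms)

lemma mv_const: "mv F (\<lambda>\<omega>. c)"
  unfolding mv_def by (auto intro!: bms)

lemma mv_smult: "f \<in> borel_measurable F \<Longrightarrow> mv F c \<Longrightarrow> mv F (\<lambda>\<omega>. f \<omega> *\<^sub>R c \<omega>)"
  unfolding mv_def by (auto intro!: bms)

lemma mv_inner: "mv F x \<Longrightarrow> mv F y \<Longrightarrow> (\<lambda>\<omega>. x \<omega> \<bullet> y \<omega>) \<in> borel_measurable F"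
  unfolding mv_def inner_vec_sum by (auto intro!: bms)

lemma mv_iscale: "mv F b \<Longrightarrow> mv F x \<Longrightarrow> mv F c \<Longrightarrow> mv F (\<lambda>\<omega>. (b \<omega> \<bullet> x \<omega>) *\<^sub>R c \<omega>)"
  by (intro mv_smult mv_inner)

lemma mv_mono: "mv F x \<Longrightarrow> sets F \<subseteq> sets G \<Longrightarrow> space F = space G \<Longrightarrow> mv G x"
  unfolding mv_def using measurable_mono[of borel borel F G] by auto

lemma meas_gen:
  fixes f :: "'a \<Rightarrow> 'b::topological_space" and g :: "'b \<Rightarrow> real"
  assumes G: "gen_events M f \<subseteq> G" "G \<subseteq> Pow (space M)" and g: "g \<in> borel_measurable borel"
  shows "(\<lambda>\<omega>. g (f \<omega>)) \<in> borel_measurable (sigma (space M) G)"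
proof (rule measurableI)
  fix A :: "real set" assume A: "A \<in> sets borel"
  have gA: "g -` A \<in> sets borel" using measurable_sets[OF g A] by simp
  have "(\<lambda>\<omega>. g (f \<omega>)) -` A \<inter> space (sigma (space M) G) = f -` (g -` A) \<inter> space M"
    using G(2) by (auto simp: space_measure_of)
  also have "\<dots> \<in> gen_events M f" unfolding gen_events_def using gA by blast
  also have "\<dots> \<subseteq> sets (sigma (space M) G)" using G by (auto simp: sets_measure_of intro: sigma_sets.Basic)
  finally show "(\<lambda>\<omega>. g (f \<omega>)) -` A \<inter> space (sigma (space M) G) \<in> sets (sigma (space M) G)" .
qed simp

lemma vec_nth_borel: "(\<lambda>x::real^'k. x $ l) \<in> borel_measurable borel"
  by (intro borel_measurable_continuous_onI linear_continuous_on bounded_linear_vec_nth)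

lemma gen_events_sub: "f \<in> borel_measurable M \<Longrightarrow> gen_events M f \<subseteq> sets M"
  unfolding gen_events_def by (auto intro: measurable_sets)

locale dset = prob_space M for M :: "'a measure" +
  fixes \<phi> :: "real^'d \<Rightarrow> real^'d \<Rightarrow> real"
    and feat :: "'m::finite \<Rightarrow> real^'d"
    and \<theta> :: "real^'m"
    and \<theta>0 :: "'n::finite \<Rightarrow> 'a \<Rightarrow> real^'m"
    and X :: "nat \<Rightarrow> 'n \<Rightarrow> 'c::finite \<Rightarrow> 'a \<Rightarrow> real^'d"
    and v :: "nat \<Rightarrow> 'n \<Rightarrow> 'c \<Rightarrow> 'a \<Rightarrow> real"
    and \<sigma>v :: real
    and E :: "'n \<Rightarrow> 'n \<Rightarrow> bool"
    and \<alpha> :: real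
  assumes phi_bound: "\<And>x w. \<bar>\<phi> x w\<bar> \<le> sqrt 2"
    and phi_meas: "\<And>w. (\<lambda>x. \<phi> x w) \<in> borel_measurable borel"
    and theta0_rv: "\<And>i. \<theta>0 i \<in> borel_measurable M"
    and theta0_L2: "\<And>i. integrable M (\<lambda>\<omega>. (norm (\<theta>0 i \<omega>))\<^sup>2)"
    and X_rv: "\<And>t i k. X t i k \<in> borel_measurable M"
    and X_stationary: "\<And>t. distr M (PiM UNIV (\<lambda>_. borel)) (\<lambda>\<omega> p. X t (fst p) (snd p) \<omega>)
                          = distr M (PiM UNIV (\<lambda>_. borel)) (\<lambda>\<omega> p. X 0 (fst p) (snd p) \<omega>)"
    and v_rv: "\<And>t i k. v t i k \<in> borel_measurable M"
    and v_int: "\<And>t i k. integrable M (v t i k)"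
    and v_mean: "\<And>t i k. integral\<^sup>L M (v t i k) = 0"
    and v_int2: "\<And>t i k k'. integrable M (\<lambda>\<omega>. v t i k \<omega> * v t i k' \<omega>)"
    and v_cov: "\<And>t i k k'. integral\<^sup>L M (\<lambda>\<omega>. v t i k \<omega> * v t i k' \<omega>)
                             = (if k = k' then \<sigma>v\<^sup>2 else 0)"
    and indep: "\<And>t. indep_sets
                  (\<lambda>b::nat. if b = 0 then past_events M \<theta>0 X v t
                            else if b = 1 then input_events M X t
                            else noise_events M v t) {0, 1, 2}"
    and E_sym: "\<And>i j. E i j = E j i"
    and E_irrefl: "\<And>i. \<not> E i i"
    and alpha_pos: "0 < \<alpha>"
begin

abbreviation "Lap \<equiv> laplacian E"
definition "Pm = mat 1 - \<alpha> *\<^sub>R Lap"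

definition est' where "est' t i \<omega> = est Pm \<alpha> \<phi> feat \<theta> \<theta>0 X v t i \<omega>"
definition e where "e t i \<omega> = est' t i \<omega> - \<theta>"
definition h where "h t i k \<omega> = Hrow \<phi> feat X t i k \<omega>"
definition Dm where "Dm t i \<omega> x = (\<Sum>k\<in>UNIV. (h t i k \<omega> \<bullet> x) *\<^sub>R h t i k \<omega>)"
definition Wv where "Wv t i \<omega> = (\<Sum>k\<in>UNIV. v t i k \<omega> *\<^sub>R h t i k \<omega>)"

definition gP where "gP t = (\<Union>i. gen_events M (\<theta>0 i))
      \<union> (\<Union>s\<in>{..<t}. \<Union>i. \<Union>k. gen_events M (X s i k) \<union> gen_events M (v s i k))"
definition gI where "gI t = (\<Union>i. \<Union>k. gen_events M (X t i k))"
definition gN where "gN t = (\<Union>i. \<Union>k. gen_events M (v t i k))"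
definition FP where "FP t = sigma (space M) (gP t)"
definition FI where "FI t = sigma (space M) (gI t)"
definition FN where "FN t = sigma (space M) (gN t)"
definition FPI where "FPI t = sigma (space M) (gP t \<union> gI t)"

lemma gP_sub: "gP t \<subseteq> sets M"
  unfolding gP_def using gen_events_sub[OF theta0_rv] gen_events_sub[OF X_rv] gen_events_sub[OF v_rv] by blast
lemma gI_sub: "gI t \<subseteq> sets M"
  unfolding gI_def using gen_events_sub[OF X_rv] by blast
lemma gN_sub: "gN t \<subseteq> sets M"
  unfolding gN_def using gen_events_sub[OF v_rv] by blast

lemma gP_pow: "gP t \<subseteq> Pow (space M)" using gP_sub sets.sets_into_space by blast
lemma gI_pow: "gI t \<subseteq> Pow (space M)" using gI_sub sets.sets_into_space by blast
lemma gN_pow: "gN t \<subseteq> Pow (space M)" using gN_sub sets.sets_into_space by blast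
lemma gPI_pow: "gP t \<union> gI t \<subseteq> Pow (space M)" using gP_pow gI_pow by blast

lemma space_F: "space (FP t) = space M" "space (FI t) = space M" "space (FN t) = space M" "space (FPI t) = space M"
  unfolding FP_def FI_def FN_def FPI_def using gP_pow gI_pow gN_pow gPI_pow by (simp_all add: space_measure_of)

lemma sets_F: "sets (FP t) = past_events M \<theta>0 X v t" "sets (FI t) = input_events M X t"
    "sets (FN t) = noise_events M v t" "sets (FPI t) = sigma_sets (space M) (gP t \<union> gI t)"
  unfolding FP_def FI_def FN_def FPI_def past_events_def input_events_def noise_events_def
  using gP_pow gI_pow gN_pow gPI_pow by (simp_all add: sets_measure_of gP_def gI_def gN_def)

lemma sets_F_sub: "sets (FP t) \<subseteq> sets M" "sets (FI t) \<subseteq> sets M" "sets (FN t) \<subseteq> sets M" "sets (FPI t) \<subseteq> sets M"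
  unfolding FP_def FI_def FN_def FPI_def
  using gP_pow gI_pow gN_pow gPI_pow gP_sub gI_sub gN_sub
  by (simp_all add: sets_measure_of sets.sigma_sets_subset)

lemma sets_FP_mono: "sets (FP t) \<subseteq> sets (FP (Suc t))"
proof -
  have "gP t \<subseteq> gP (Suc t)" unfolding gP_def by auto
  thus ?thesis unfolding FP_def using gP_pow by (simp add: sets_measure_of sigma_sets_mono')
qed

lemma sets_FP_FPI: "sets (FP t) \<subseteq> sets (FPI t)" and sets_FI_FPI: "sets (FI t) \<subseteq> sets (FPI t)"
  unfolding FP_def FI_def FPI_def using gP_pow gI_pow gPI_pow
  by (simp_all add: sets_measure_of sigma_sets_mono')

lemma mv_M: "mv (FP t) x \<Longrightarrow> mv M x" "mv (FI t) x \<Longrightarrow> mv M x" "mv (FPI t) x \<Longrightarrow> mv M x"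
  using mv_mono[OF _ sets_F_sub(1)] mv_mono[OF _ sets_F_sub(2)] mv_mono[OF _ sets_F_sub(4)] space_F by auto

lemma meas_M1: "f \<in> borel_measurable (FP t) \<Longrightarrow> f \<in> borel_measurable M"
  using measurable_mono[OF order_refl refl sets_F_sub(1) space_F(1)] by blast
lemma meas_M2: "f \<in> borel_measurable (FI t) \<Longrightarrow> f \<in> borel_measurable M"
  using measurable_mono[OF order_refl refl sets_F_sub(2) space_F(2)] by blast
lemma meas_M3: "f \<in> borel_measurable (FN t) \<Longrightarrow> f \<in> borel_measurable M"
  using measurable_mono[OF order_refl refl sets_F_sub(3) space_F(3)] by blast
lemma meas_M4: "f \<in> borel_measurable (FPI t) \<Longrightarrow> f \<in> borel_measurable M"
  using measurable_mono[OF order_refl refl sets_F_sub(4) space_F(4)] by blast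

lemma h_comp: "h t i k \<omega> $ l = \<phi> (X t i k \<omega>) (feat l)"
  by (simp add: h_def Hrow_def)

lemma mv_h_FP: "s < t \<Longrightarrow> mv (FP t) (h s i k)"
proof -
  assume st: "s < t"
  have "gen_events M (X s i k) \<subseteq> gP t" unfolding gP_def using st by blast
  thus ?thesis unfolding mv_def h_comp FP_def by (intro allI meas_gen[OF _ gP_pow phi_meas])
qed

lemma mv_h_FI: "mv (FI t) (h t i k)"
proof -
  have "gen_events M (X t i k) \<subseteq> gI t" unfolding gI_def by blast
  thus ?thesis unfolding mv_def h_comp FI_def by (intro allI meas_gen[OF _ gI_pow phi_meas])
qed

lemma v_FP: "s < t \<Longrightarrow> v s i k \<in> borel_measurable (FP t)"
proof -
  assume st: "s < t"
  have "gen_events M (v s i k) \<subseteq> gP t" unfolding gP_def using st by blast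
  from meas_gen[OF this gP_pow, of "\<lambda>x. x"] show ?thesis by (simp add: FP_def)
qed

lemma v_FN: "v t i k \<in> borel_measurable (FN t)"
proof -
  have "gen_events M (v t i k) \<subseteq> gN t" unfolding gN_def by blast
  from meas_gen[OF this gN_pow, of "\<lambda>x. x"] show ?thesis by (simp add: FN_def)
qed

lemma mv_theta0: "mv (FP t) (\<theta>0 i)"
proof -
  have "gen_events M (\<theta>0 i) \<subseteq> gP t" unfolding gP_def by blast
  thus ?thesis unfolding mv_def FP_def by (intro allI meas_gen[OF _ gP_pow vec_nth_borel])
qed

lemma bmv_h: "bmv (h t i k)"
  unfolding bmv_def bm_def h_comp
proof (intro allI conjI)
  fix l
  show "(\<lambda>\<omega>. \<phi> (X t i k \<omega>) (feat l)) \<in> borel_measurable M"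
    using measurable_compose[OF X_rv phi_meas] .
  show "\<exists>B. \<forall>\<omega>\<in>space M. \<bar>\<phi> (X t i k \<omega>) (feat l)\<bar> \<le> B" using phi_bound by blast
qed

lemma Pm_rowsum: "(\<Sum>j\<in>UNIV. Pm $ i $ j) = 1"
proof -
  have "(\<Sum>j\<in>UNIV. Pm $ i $ j) = (\<Sum>j\<in>UNIV. (mat 1 :: real^'n^'n) $ i $ j) - \<alpha> * (\<Sum>j\<in>UNIV. Lap $ i $ j)"
    by (simp add: Pm_def sum_subtractf sum_distrib_left)
  also have "\<dots> = 1" using lap_rowsum[where E=E, OF E_irrefl] by (simp add: mat_def)
  finally show ?thesis .
qed

lemma Pm_apply: "(\<Sum>j\<in>UNIV. Pm $ i $ j *\<^sub>R x j) = x i - \<alpha> *\<^sub>R Lop Lap x i"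
proof -
  have "(\<Sum>j\<in>UNIV. Pm $ i $ j *\<^sub>R x j) = (\<Sum>j\<in>UNIV. (mat 1 :: real^'n^'n) $ i $ j *\<^sub>R x j) - \<alpha> *\<^sub>R Lop Lap x i"
    by (simp add: Pm_def Lop_def scaleR_left_diff_distrib sum_subtractf scaleR_sum_right)
  also have "(\<Sum>j\<in>UNIV. (mat 1 :: real^'n^'n) $ i $ j *\<^sub>R x j) = (\<Sum>j\<in>UNIV. if i = j then x j else 0)"
    by (rule sum.cong) (simp_all add: mat_def)
  also have "\<dots> = x i" by simp
  finally show ?thesis .
qed

lemma e_rec: "e (Suc t) i \<omega> = e t i \<omega> - \<alpha> *\<^sub>R (Lop Lap (\<lambda>j. e t j \<omega>) i + Dm t i \<omega> (e t i \<omega>)) + \<alpha> *\<^sub>R Wv t i \<omega>"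
proof -
  have s1: "(\<Sum>j\<in>UNIV. Pm $ i $ j *\<^sub>R est' t j \<omega>) = e t i \<omega> - \<alpha> *\<^sub>R Lop Lap (\<lambda>j. e t j \<omega>) i + \<theta>"
  proof -
    have "(\<Sum>j\<in>UNIV. Pm $ i $ j *\<^sub>R est' t j \<omega>) = (\<Sum>j\<in>UNIV. Pm $ i $ j *\<^sub>R e t j \<omega> + Pm $ i $ j *\<^sub>R \<theta>)"
      by (simp add: e_def scaleR_diff_right)
    also have "\<dots> = (\<Sum>j\<in>UNIV. Pm $ i $ j *\<^sub>R e t j \<omega>) + (\<Sum>j\<in>UNIV. Pm $ i $ j) *\<^sub>R \<theta>"
      by (simp only: sum.distrib scaleR_sum_left)
    finally have "(\<Sum>j\<in>UNIV. Pm $ i $ j *\<^sub>R est' t j \<omega>) = (\<Sum>j\<in>UNIV. Pm $ i $ j *\<^sub>R e t j \<omega>) + (\<Sum>j\<in>UNIV. Pm $ i $ j) *\<^sub>R \<theta>" .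
    thus ?thesis by (simp add: Pm_rowsum Pm_apply)
  qed
  have s2: "(\<Sum>k\<in>UNIV. (obs \<phi> feat \<theta> X v t i k \<omega> - Hrow \<phi> feat X t i k \<omega> \<bullet> est' t i \<omega>) *\<^sub>R Hrow \<phi> feat X t i k \<omega>)
      = Wv t i \<omega> - Dm t i \<omega> (e t i \<omega>)"
    unfolding Wv_def Dm_def obs_def h_def[symmetric] e_def
    by (simp add: inner_diff_right scaleR_left_diff_distrib algebra_simps sum_subtractf[symmetric] sum.distrib[symmetric])
  have "e (Suc t) i \<omega> = (\<Sum>j\<in>UNIV. Pm $ i $ j *\<^sub>R est' t j \<omega>)
     + \<alpha> *\<^sub>R (\<Sum>k\<in>UNIV. (obs \<phi> feat \<theta> X v t i k \<omega> - Hrow \<phi> feat X t i k \<omega> \<bullet> est' t i \<omega>) *\<^sub>R Hrow \<phi> feat X t i k \<omega>) - \<theta>"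
    unfolding e_def est'_def by simp
  also have "\<dots> = e t i \<omega> - \<alpha> *\<^sub>R (Lop Lap (\<lambda>j. e t j \<omega>) i + Dm t i \<omega> (e t i \<omega>)) + \<alpha> *\<^sub>R Wv t i \<omega>"
    unfolding s1 s2 by (simp add: algebra_simps)
  finally show ?thesis .
qed

lemma e_0: "e 0 i \<omega> = \<theta>0 i \<omega> - \<theta>"
  by (simp add: e_def est'_def)

lemma mv_e: "mv (FP t) (e t i)"
proof (induction t arbitrary: i)
  case 0
  show ?case unfolding e_0 by (intro mv_diff mv_theta0 mv_const)
next
  case (Suc t)
  have IH: "mv (FP (Suc t)) (e t j)" for j
    using mv_mono[OF Suc.IH sets_FP_mono] space_F by simp
  show ?case unfolding e_rec Lop_def Dm_def Wv_def
    by (intro mv_add mv_diff mv_scale mv_sum mv_iscale mv_smult IH mv_h_FP v_FP lessI)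
qed

lemma sqi_v: "sqi (v t i k)"
  unfolding sqi_def using v_rv v_int2[of t i k k] by (simp add: power2_eq_square)

lemma sqv_e: "sqv (e t i)"
proof (induction t arbitrary: i)
  case 0
  show ?case unfolding sqv_def e_0 vector_minus_component
  proof (intro allI sqi_diff sqi_const)
    fix l
    show "sqi (\<lambda>\<omega>. \<theta>0 i \<omega> $ l)" unfolding sqi_def
    proof
      show "(\<lambda>\<omega>. \<theta>0 i \<omega> $ l) \<in> borel_measurable M" using measurable_compose[OF theta0_rv vec_nth_borel] .
      show "integrable M (\<lambda>\<omega>. (\<theta>0 i \<omega> $ l)^2)"
      proof (rule integrable_dom[OF theta0_L2])
        show "(\<lambda>\<omega>. (\<theta>0 i \<omega> $ l)^2) \<in> borel_measurable M"
          using measurable_compose[OF theta0_rv vec_nth_borel] by (auto intro!: bms)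
        fix \<omega>
        have "\<bar>\<theta>0 i \<omega> $ l\<bar> \<le> norm (\<theta>0 i \<omega>)" by (rule component_le_norm_cart)
        hence "\<bar>\<theta>0 i \<omega> $ l\<bar>^2 \<le> (norm (\<theta>0 i \<omega>))^2" by (rule power_mono) simp
        thus "\<bar>(\<theta>0 i \<omega> $ l)^2\<bar> \<le> (norm (\<theta>0 i \<omega>))^2" by simp
      qed
    qed
  qed
next
  case (Suc t)
  show ?case unfolding e_rec Lop_def Dm_def Wv_def
    by (intro sqv_add sqv_diff sqv_scale sqv_sum sqv_iscale sqv_smult Suc.IH bmv_h sqi_v)
qed

end

context prob_space begin

lemma indep_set_mono: "indep_set A B \<Longrightarrow> A' \<subseteq> A \<Longrightarrow> B' \<subseteq> B \<Longrightarrow> indep_set A' B'"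
  unfolding indep_sets2_eq by blast

lemma indep_set_of_sets:
  assumes "indep_sets F I" "i \<in> I" "j \<in> I" "i \<noteq> j"
  shows "indep_set (F i) (F j)"
  unfolding indep_sets2_eq
proof (intro conjI ballI)
  show "F i \<subseteq> events" "F j \<subseteq> events" using assms(1-3) unfolding indep_sets_def by auto
  fix a b assume a: "a \<in> F i" and b: "b \<in> F j"
  have "prob (\<Inter>k\<in>{i,j}. (\<lambda>k. if k = i then a else b) k) = (\<Prod>k\<in>{i,j}. prob ((\<lambda>k. if k = i then a else b) k))"
    by (rule indep_setsD[OF assms(1)]) (use assms a b in auto)
  thus "prob (a \<inter> b) = prob a * prob b" using assms(4) by (simp add: Int_commute)
qed

lemma indep_var_from_sets:
  assumes ind: "indep_set (sets F1) (sets F2)" and sp: "space F1 = space M" "space F2 = space M"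
    and sub: "sets F1 \<subseteq> sets M" "sets F2 \<subseteq> sets M"
    and f: "f \<in> borel_measurable F1" and g: "g \<in> borel_measurable F2"
  shows "indep_var borel f borel (g :: 'a \<Rightarrow> real)"
  unfolding indep_var_eq
proof (intro conjI)
  show "random_variable borel f" using measurable_mono[OF order_refl refl sub(1) sp(1)] f by blast
  show "random_variable borel g" using measurable_mono[OF order_refl refl sub(2) sp(2)] g by blast
  have "{f -` A \<inter> space M |A. A \<in> sets borel} \<subseteq> sets F1" using measurable_sets[OF f] sp by auto
  from sets.sigma_sets_subset[OF this] have s1: "sigma_sets (space M) {f -` A \<inter> space M |A. A \<in> sets borel} \<subseteq> sets F1"
    using sp by simp
  have "{g -` A \<inter> space M |A. A \<in> sets borel} \<subseteq> sets F2" using measurable_sets[OF g] sp by auto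
  from sets.sigma_sets_subset[OF this] have s2: "sigma_sets (space M) {g -` A \<inter> space M |A. A \<in> sets borel} \<subseteq> sets F2"
    using sp by simp
  show "indep_set (sigma_sets (space M) {f -` A \<inter> space M |A. A \<in> sets borel})
     (sigma_sets (space M) {g -` A \<inter> space M |A. A \<in> sets borel})"
    by (rule indep_set_mono[OF ind s1 s2])
qed

lemma indep_mult:
  assumes ind: "indep_set (sets F1) (sets F2)" and sp: "space F1 = space M" "space F2 = space M"
    and sub: "sets F1 \<subseteq> sets M" "sets F2 \<subseteq> sets M"
    and f: "f \<in> borel_measurable F1" and g: "g \<in> borel_measurable F2"
    and fi: "integrable M f" and gi: "integrable M (g :: 'a \<Rightarrow> real)"
  shows "integral\<^sup>L M (\<lambda>\<omega>. f \<omega> * g \<omega>) = integral\<^sup>L M f * integral\<^sup>L M g"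
    and "integrable M (\<lambda>\<omega>. f \<omega> * g \<omega>)"
  using indep_var_lebesgue_integral[OF indep_var_from_sets[OF assms(1-7)] fi gi]
    indep_var_integrable[OF indep_var_from_sets[OF assms(1-7)] fi gi] by auto

end

context dset begin

lemma indF: "indep_sets (\<lambda>b::nat. if b = 0 then sets (FP t) else if b = 1 then sets (FI t) else sets (FN t)) {0,1,2}"
  unfolding sets_F using indep[of t] by simp

lemma ind_PI: "indep_set (sets (FP t)) (sets (FI t))"
  using indep_set_of_sets[OF indF, of 0 1] by simp

lemma ind_IN: "indep_set (sets (FI t)) (sets (FN t))"
  using indep_set_of_sets[OF indF, of 1 2] by simp

lemma ind_PIN: "indep_set (sets (FPI t)) (sets (FN t))"
proof -
  define F where "F = (\<lambda>b::nat. if b = 0 then sets (FP t) else if b = 1 then sets (FI t) else sets (FN t))"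
  define I where "I = (\<lambda>b::bool. if b then {0::nat,1} else {2})"
  have U: "(\<Union>j\<in>UNIV. I j) = {0,1,2}" unfolding I_def by (auto simp: UNIV_bool)
  have "indep_sets (\<lambda>j. sigma_sets (space M) (\<Union>i\<in>I j. F i)) UNIV"
  proof (rule indep_sets_collect_sigma)
    show "indep_sets F (\<Union>j\<in>UNIV. I j)" unfolding U F_def by (rule indF)
    fix i j assume "j \<in> (UNIV::bool set)" "i \<in> I j"
    show "Int_stable (F i)" unfolding F_def Int_stable_def by auto
  next
    show "disjoint_family_on I UNIV" unfolding I_def disjoint_family_on_def by (auto simp: UNIV_bool)
  qed
  hence "indep_set (sigma_sets (space M) (\<Union>i\<in>I True. F i)) (sigma_sets (space M) (\<Union>i\<in>I False. F i))"
    unfolding indep_set_def by (rule indep_sets_cong[THEN iffD1, rotated -1]) (auto split: bool.split)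
  hence ind2: "indep_set (sigma_sets (space M) (sets (FP t) \<union> sets (FI t))) (sigma_sets (space M) (sets (FN t)))"
    unfolding I_def F_def by (simp add: Un_commute)
  have s1: "sets (FPI t) \<subseteq> sigma_sets (space M) (sets (FP t) \<union> sets (FI t))"
  proof -
    have "gP t \<subseteq> sets (FP t)" unfolding FP_def using gP_pow by (auto simp: sets_measure_of)
    moreover have "gI t \<subseteq> sets (FI t)" unfolding FI_def using gI_pow by (auto simp: sets_measure_of)
    ultimately have "gP t \<union> gI t \<subseteq> sets (FP t) \<union> sets (FI t)" by blast
    thus ?thesis unfolding sets_F(4) by (rule sigma_sets_mono')
  qed
  have s2: "sets (FN t) \<subseteq> sigma_sets (space M) (sets (FN t))"
    using sigma_sets.Basic by blast
  show ?thesis by (rule indep_set_mono[OF ind2 s1 s2])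
qed

end

lemma stack_norm_le:
  assumes "(\<Sum>i\<in>UNIV. (norm (a i))^2) \<le> c^2 * (\<Sum>i\<in>UNIV. (norm (b i))^2)" "0 \<le> c"
  shows "norm (stack a) \<le> c * norm (stack b)"
proof -
  have e: "(c * norm (stack b))^2 = c^2 * (\<Sum>i\<in>UNIV. (norm (b i))^2)"
    by (simp only: power_mult_distrib norm_stack)
  have "(norm (stack a))^2 \<le> (c * norm (stack b))^2"
    unfolding e norm_stack by (rule assms(1))
  thus ?thesis by (rule power2_le_imp_le) (use assms(2) in simp)
qed

context dset begin

lemma stat:
  "integral\<^sup>L M (\<lambda>\<omega>. \<Sum>k\<in>UNIV. \<phi> (X t i k \<omega>) (feat l) * \<phi> (X t i k \<omega>) (feat l'))
   = integral\<^sup>L M (\<lambda>\<omega>. \<Sum>k\<in>UNIV. \<phi> (X 0 i k \<omega>) (feat l) * \<phi> (X 0 i k \<omega>) (feat l'))"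
proof -
  define N where "N = (PiM (UNIV :: ('n \<times> 'c) set) (\<lambda>_. borel :: (real^'d) measure))"
  define T where "T s = (\<lambda>\<omega> (p :: 'n \<times> 'c). X s (fst p) (snd p) \<omega>)" for s
  define F where "F f = (\<Sum>k\<in>UNIV. \<phi> (f (i,k)) (feat l) * \<phi> (f (i,k)) (feat l'))" for f :: "'n \<times> 'c \<Rightarrow> real^'d"
  have Tm: "T s \<in> measurable M N" for s
    unfolding T_def N_def
    by (rule measurable_PiM_single') (auto intro: X_rv)
  have c: "(\<lambda>f. f p) \<in> measurable N borel" for p
    unfolding N_def by (rule measurable_component_singleton) simp
  have cp: "(\<lambda>f. \<phi> (f p) w) \<in> borel_measurable N" for p w
    by (rule measurable_compose[OF c phi_meas])
  have Fm: "F \<in> borel_measurable N"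
    unfolding F_def by (intro borel_measurable_sum borel_measurable_times cp)
  have "integral\<^sup>L M (\<lambda>\<omega>. F (T t \<omega>)) = integral\<^sup>L (distr M N (T t)) F"
    by (rule integral_distr[OF Tm Fm, symmetric])
  also have "distr M N (T t) = distr M N (T 0)"
    unfolding N_def T_def by (rule X_stationary)
  also have "integral\<^sup>L (distr M N (T 0)) F = integral\<^sup>L M (\<lambda>\<omega>. F (T 0 \<omega>))"
    by (rule integral_distr[OF Tm Fm])
  finally show ?thesis by (simp add: F_def T_def)
qed

lemma NC_pos: "0 < real CARD('c)" by simp

lemma Egt: "integral\<^sup>L M (\<lambda>\<omega>. \<Sum>k\<in>UNIV. \<phi> (X t i k \<omega>) (feat l) * \<phi> (X t i k \<omega>) (feat l'))
   = real CARD('c) * Gmat M \<phi> feat X i $ l $ l'"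
proof -
  have "real CARD('c) * Gmat M \<phi> feat X i $ l $ l' = integral\<^sup>L M (\<lambda>\<omega>. \<Sum>k\<in>UNIV. \<phi> (X 0 i k \<omega>) (feat l) * \<phi> (X 0 i k \<omega>) (feat l'))"
    unfolding Gmat_def by simp
  thus ?thesis by (simp only: stat[of t i l l'])
qed

lemma G_sym: "transpose (Gmat M \<phi> feat X i) = Gmat M \<phi> feat X i"
  unfolding Gmat_def transpose_def by (simp add: vec_eq_iff mult.commute)

lemma Lap_sym: "transpose Lap = Lap" by (rule lap_sym[OF E_sym])

lemma Lap_psd: "0 \<le> qf Lap x" by (rule lap_psd[OF E_sym E_irrefl])

lemma B_sym: "transpose (Bmat Lap (real CARD('c)) (Gmat M \<phi> feat X)) = Bmat Lap (real CARD('c)) (Gmat M \<phi> feat X)"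
  by (rule Bmat_sym[OF Lap_sym G_sym])

lemma lam1_nonneg: "0 \<le> lam_max Lap"
  using psd_norm_bound(2)[OF Lap_sym Lap_psd] .

lemma Lap_norm: "norm (Lap *v x) \<le> lam_max Lap * norm x"
  using psd_norm_bound(1)[OF Lap_sym Lap_psd] .

lemma h_norm2: "(norm (h t i k \<omega>))^2 \<le> 2 * real CARD('m)"
proof -
  have "(norm (h t i k \<omega>))^2 = (\<Sum>l\<in>UNIV. (\<phi> (X t i k \<omega>) (feat l))^2)"
    by (simp add: norm_sq_vec h_comp)
  also have "\<dots> \<le> (\<Sum>l\<in>(UNIV::'m set). 2)"
  proof (rule sum_mono)
    fix l
    have "\<bar>\<phi> (X t i k \<omega>) (feat l)\<bar>^2 \<le> (sqrt 2)^2" by (rule power_mono[OF phi_bound]) simp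
    thus "(\<phi> (X t i k \<omega>) (feat l))^2 \<le> 2" by simp
  qed
  finally show ?thesis by simp
qed

lemma Dm_norm: "norm (Dm t i \<omega> x) \<le> 2 * real CARD('m) * real CARD('c) * norm x"
proof -
  have "norm (Dm t i \<omega> x) \<le> (\<Sum>k\<in>UNIV. norm ((h t i k \<omega> \<bullet> x) *\<^sub>R h t i k \<omega>))"
    unfolding Dm_def by (rule norm_sum)
  also have "\<dots> \<le> (\<Sum>k\<in>(UNIV::'c set). 2 * real CARD('m) * norm x)"
  proof (rule sum_mono)
    fix k
    have "norm ((h t i k \<omega> \<bullet> x) *\<^sub>R h t i k \<omega>) = \<bar>h t i k \<omega> \<bullet> x\<bar> * norm (h t i k \<omega>)" by simp
    also have "\<dots> \<le> (norm (h t i k \<omega>) * norm x) * norm (h t i k \<omega>)"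
      by (rule mult_right_mono[OF Cauchy_Schwarz_ineq2]) simp
    also have "\<dots> = (norm (h t i k \<omega>))^2 * norm x" by (simp add: power2_eq_square)
    also have "\<dots> \<le> 2 * real CARD('m) * norm x" by (rule mult_right_mono[OF h_norm2]) simp
    finally show "norm ((h t i k \<omega> \<bullet> x) *\<^sub>R h t i k \<omega>) \<le> 2 * real CARD('m) * norm x" .
  qed
  also have "\<dots> = 2 * real CARD('m) * real CARD('c) * norm x" by simp
  finally show ?thesis .
qed

lemma R_bound:
  fixes x :: "'n \<Rightarrow> real^'m"
  shows "(\<Sum>i\<in>UNIV. (norm (Lop Lap x i + Dm t i \<omega> (x i)))^2) \<le> (lam_max Lap + 2 * real CARD('m) * real CARD('c))^2 * (\<Sum>i\<in>UNIV. (norm (x i))^2)"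
proof -
  have b1: "norm (stack (\<lambda>i. Lop Lap x i)) \<le> lam_max Lap * norm (stack x)"
  proof (rule stack_norm_le[OF _ lam1_nonneg])
    have "(\<Sum>i\<in>UNIV. (norm (Lop Lap x i))^2) = (\<Sum>l\<in>UNIV. (norm (Lap *v col x l))^2)" by (rule sum_norm_Lop)
    also have "\<dots> \<le> (\<Sum>l\<in>UNIV. (lam_max Lap)^2 * (norm (col x l))^2)"
    proof (rule sum_mono)
      fix l
      have "(norm (Lap *v col x l))^2 \<le> (lam_max Lap * norm (col x l))^2"
        by (rule power_mono[OF Lap_norm]) simp
      thus "(norm (Lap *v col x l))^2 \<le> (lam_max Lap)^2 * (norm (col x l))^2" by (simp add: power_mult_distrib)
    qed
    also have "\<dots> = (lam_max Lap)^2 * (\<Sum>i\<in>UNIV. (norm (x i))^2)"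
      by (simp only: sum_norm_col[of x] sum_distrib_left)
    finally show "(\<Sum>i\<in>UNIV. (norm (Lop Lap x i))^2) \<le> (lam_max Lap)^2 * (\<Sum>i\<in>UNIV. (norm (x i))^2)" .
  qed
  have b2: "norm (stack (\<lambda>i. Dm t i \<omega> (x i))) \<le> (2 * real CARD('m) * real CARD('c)) * norm (stack x)"
  proof (rule stack_norm_le)
    have "(\<Sum>i\<in>UNIV. (norm (Dm t i \<omega> (x i)))^2) \<le> (\<Sum>i\<in>UNIV. (2 * real CARD('m) * real CARD('c))^2 * (norm (x i))^2)"
    proof (rule sum_mono)
      fix i
      have "(norm (Dm t i \<omega> (x i)))^2 \<le> (2 * real CARD('m) * real CARD('c) * norm (x i))^2"
        by (rule power_mono[OF Dm_norm]) simp
      thus "(norm (Dm t i \<omega> (x i)))^2 \<le> (2 * real CARD('m) * real CARD('c))^2 * (norm (x i))^2" by (simp add: power_mult_distrib)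
    qed
    thus "(\<Sum>i\<in>UNIV. (norm (Dm t i \<omega> (x i)))^2) \<le> (2 * real CARD('m) * real CARD('c))^2 * (\<Sum>i\<in>UNIV. (norm (x i))^2)"
      by (simp add: sum_distrib_left)
  qed simp
  have "norm (stack (\<lambda>i. Lop Lap x i + Dm t i \<omega> (x i))) \<le> (lam_max Lap + 2 * real CARD('m) * real CARD('c)) * norm (stack x)"
  proof -
    have "norm (stack (\<lambda>i. Lop Lap x i + Dm t i \<omega> (x i)))
        \<le> norm (stack (\<lambda>i. Lop Lap x i)) + norm (stack (\<lambda>i. Dm t i \<omega> (x i)))"
      unfolding stack_add by (rule norm_triangle_ineq)
    also have "\<dots> \<le> (lam_max Lap + 2 * real CARD('m) * real CARD('c)) * norm (stack x)" using b1 b2 by (simp add: distrib_right)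
    finally show ?thesis .
  qed
  hence "(norm (stack (\<lambda>i. Lop Lap x i + Dm t i \<omega> (x i))))^2 \<le> ((lam_max Lap + 2 * real CARD('m) * real CARD('c)) * norm (stack x))^2"
    by (rule power_mono) simp
  thus ?thesis by (simp only: norm_stack power_mult_distrib)
qed

end

context dset begin

definition r where "r t i \<omega> = Lop Lap (\<lambda>j. e t j \<omega>) i + Dm t i \<omega> (e t i \<omega>)"
definition u where "u t i \<omega> = e t i \<omega> - \<alpha> *\<^sub>R r t i \<omega>"
definition w where "w t i \<omega> = \<alpha> *\<^sub>R Wv t i \<omega>"

lemma e_Suc_uw: "e (Suc t) i \<omega> = u t i \<omega> + w t i \<omega>"
  by (simp add: e_rec u_def w_def r_def)

lemma sqv_r: "sqv (r t i)"
  unfolding r_def Lop_def Dm_def by (intro sqv_add sqv_sum sqv_scale sqv_iscale bmv_h sqv_e)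

lemma sqv_u: "sqv (u t i)"
  unfolding u_def by (intro sqv_diff sqv_scale sqv_e sqv_r)

lemma sqv_w: "sqv (w t i)"
  unfolding w_def Wv_def by (intro sqv_scale sqv_sum sqv_smult sqi_v bmv_h)

lemma mv_e_FPI: "mv (FPI t) (e t i)"
  using mv_mono[OF mv_e sets_FP_FPI] space_F by simp

lemma mv_h_FPI: "mv (FPI t) (h t i k)"
  using mv_mono[OF mv_h_FI sets_FI_FPI] space_F by simp

lemma mv_u_FPI: "mv (FPI t) (u t i)"
  unfolding u_def r_def Lop_def Dm_def
  by (intro mv_diff mv_add mv_sum mv_scale mv_iscale mv_e_FPI mv_h_FPI)

lemma pw_i: "(norm (e (Suc t) i \<omega>))^2 = (norm (e t i \<omega>))^2 - 2 * \<alpha> * (e t i \<omega> \<bullet> r t i \<omega>)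
    + \<alpha>^2 * (norm (r t i \<omega>))^2 + 2 * (u t i \<omega> \<bullet> w t i \<omega>) + (norm (w t i \<omega>))^2"
proof -
  have uu: "u t i \<omega> \<bullet> u t i \<omega> = e t i \<omega> \<bullet> e t i \<omega> - 2 * \<alpha> * (e t i \<omega> \<bullet> r t i \<omega>) + \<alpha>^2 * (r t i \<omega> \<bullet> r t i \<omega>)"
    unfolding u_def by (simp add: inner_diff_left inner_diff_right inner_commute power2_eq_square algebra_simps)
  have "(norm (e (Suc t) i \<omega>))^2 = u t i \<omega> \<bullet> u t i \<omega> + 2 * (u t i \<omega> \<bullet> w t i \<omega>) + w t i \<omega> \<bullet> w t i \<omega>"
    unfolding e_Suc_uw power2_norm_eq_inner by (simp add: inner_add_left inner_add_right inner_commute)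
  thus ?thesis unfolding uu by (simp add: power2_norm_eq_inner)
qed

lemma pw: "(\<Sum>i\<in>UNIV. (norm (e (Suc t) i \<omega>))^2) = (\<Sum>i\<in>UNIV. (norm (e t i \<omega>))^2)
    - 2 * \<alpha> * (\<Sum>i\<in>UNIV. e t i \<omega> \<bullet> r t i \<omega>) + \<alpha>^2 * (\<Sum>i\<in>UNIV. (norm (r t i \<omega>))^2)
    + 2 * (\<Sum>i\<in>UNIV. u t i \<omega> \<bullet> w t i \<omega>) + (\<Sum>i\<in>UNIV. (norm (w t i \<omega>))^2)"
  unfolding pw_i by (simp add: sum.distrib sum_subtractf sum_distrib_left)

lemma inner_Dm: "x \<bullet> Dm t i \<omega> x = (\<Sum>l\<in>UNIV. \<Sum>l'\<in>UNIV. (x$l * x$l') * (\<Sum>k\<in>UNIV. h t i k \<omega> $ l * h t i k \<omega> $ l'))"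
proof -
  have "x \<bullet> Dm t i \<omega> x = (\<Sum>k\<in>UNIV. (\<Sum>l\<in>UNIV. h t i k \<omega> $ l * x $ l) * (\<Sum>l'\<in>UNIV. x $ l' * h t i k \<omega> $ l'))"
    unfolding Dm_def inner_sum_right inner_scaleR_right by (simp only: inner_vec_sum)
  also have "\<dots> = (\<Sum>k\<in>UNIV. \<Sum>l\<in>UNIV. \<Sum>l'\<in>UNIV. (x$l * x$l') * (h t i k \<omega> $ l * h t i k \<omega> $ l'))"
    by (simp add: sum_product mult_ac)
  also have "\<dots> = (\<Sum>l\<in>UNIV. \<Sum>k\<in>UNIV. \<Sum>l'\<in>UNIV. (x$l * x$l') * (h t i k \<omega> $ l * h t i k \<omega> $ l'))"
    by (rule sum.swap)
  also have "\<dots> = (\<Sum>l\<in>UNIV. \<Sum>l'\<in>UNIV. \<Sum>k\<in>UNIV. (x$l * x$l') * (h t i k \<omega> $ l * h t i k \<omega> $ l'))"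
    by (rule sum.cong[OF refl], rule sum.swap)
  also have "\<dots> = (\<Sum>l\<in>UNIV. \<Sum>l'\<in>UNIV. (x$l * x$l') * (\<Sum>k\<in>UNIV. h t i k \<omega> $ l * h t i k \<omega> $ l'))"
    by (simp only: sum_distrib_left)
  finally show ?thesis .
qed

lemma inner_G: "x \<bullet> (G *v x) = (\<Sum>l\<in>UNIV. \<Sum>l'\<in>UNIV. (x$l * x$l') * G$l$l')"
  by (simp add: inner_vec_sum matrix_vector_mult_def sum_distrib_left mult_ac)

lemma KD: "integral\<^sup>L M (\<lambda>\<omega>. e t i \<omega> \<bullet> Dm t i \<omega> (e t i \<omega>))
   = integral\<^sup>L M (\<lambda>\<omega>. real CARD('c) * (e t i \<omega> \<bullet> (Gmat M \<phi> feat X i *v e t i \<omega>)))"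
proof -
  define g where "g l l' \<omega> = (\<Sum>k\<in>UNIV. h t i k \<omega> $ l * h t i k \<omega> $ l')" for l l' \<omega>
  define f where "f l l' \<omega> = e t i \<omega> $ l * e t i \<omega> $ l'" for l l' \<omega>
  have fm: "f l l' \<in> borel_measurable (FP t)" for l l'
    using mv_e[of t i] unfolding mv_def f_def by (auto intro!: bms)
  have gm: "g l l' \<in> borel_measurable (FI t)" for l l'
    using mv_h_FI[of t i] unfolding mv_def g_def by (auto intro!: bms)
  have fi: "integrable M (f l l')" for l l'
    using sqv_e[of t i] unfolding f_def sqv_def by (intro sqi_prod) auto
  have gb: "bm (g l l')" for l l'
    using bmv_h[of t i] unfolding g_def bmv_def by (intro bm_sum bm_mult) auto
  have gi: "integrable M (g l l')" for l l' by (rule bm_int[OF gb])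
  have Eg: "integral\<^sup>L M (g l l') = real CARD('c) * Gmat M \<phi> feat X i $ l $ l'" for l l'
    unfolding g_def h_comp by (rule Egt)
  have prod: "integral\<^sup>L M (\<lambda>\<omega>. f l l' \<omega> * g l l' \<omega>) = integral\<^sup>L M (f l l') * integral\<^sup>L M (g l l')"
    and prodi: "integrable M (\<lambda>\<omega>. f l l' \<omega> * g l l' \<omega>)" for l l'
    using indep_mult[OF ind_PI space_F(1,2) sets_F_sub(1,2) fm gm fi gi] by auto
  have "integral\<^sup>L M (\<lambda>\<omega>. e t i \<omega> \<bullet> Dm t i \<omega> (e t i \<omega>))
      = integral\<^sup>L M (\<lambda>\<omega>. \<Sum>l\<in>UNIV. \<Sum>l'\<in>UNIV. f l l' \<omega> * g l l' \<omega>)"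
    unfolding inner_Dm f_def g_def ..
  also have "\<dots> = (\<Sum>l\<in>UNIV. \<Sum>l'\<in>UNIV. integral\<^sup>L M (f l l') * (real CARD('c) * Gmat M \<phi> feat X i $ l $ l'))"
    using prodi by (simp add: Bochner_Integration.integral_sum prod Eg)
  also have "\<dots> = integral\<^sup>L M (\<lambda>\<omega>. \<Sum>l\<in>UNIV. \<Sum>l'\<in>UNIV. f l l' \<omega> * (real CARD('c) * Gmat M \<phi> feat X i $ l $ l'))"
    using fi by (simp add: Bochner_Integration.integral_sum)
  also have "\<dots> = integral\<^sup>L M (\<lambda>\<omega>. real CARD('c) * (e t i \<omega> \<bullet> (Gmat M \<phi> feat X i *v e t i \<omega>)))"
    unfolding inner_G f_def by (simp add: sum_distrib_left mult_ac)
  finally show ?thesis .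
qed

lemma sqv_matvec: "sqv x \<Longrightarrow> sqv (\<lambda>\<omega>. A *v x \<omega>)"
  unfolding sqv_def matrix_vector_mult_def by (auto intro!: sqi_sum sqi_cmult)

lemma sqv_Lp: "sqv (\<lambda>\<omega>. Lop Lap (\<lambda>j. e t j \<omega>) i)"
  unfolding Lop_def by (intro sqv_sum sqv_scale sqv_e)

lemma sqv_Dd: "sqv (\<lambda>\<omega>. Dm t i \<omega> (e t i \<omega>))"
  unfolding Dm_def by (intro sqv_sum sqv_iscale bmv_h sqv_e)

lemma IC: "integral\<^sup>L M (\<lambda>\<omega>. \<Sum>i\<in>UNIV. u t i \<omega> \<bullet> w t i \<omega>) = 0"
proof -
  have pw: "u t i \<omega> \<bullet> w t i \<omega> = \<alpha> * (\<Sum>k\<in>UNIV. (u t i \<omega> \<bullet> h t i k \<omega>) * v t i k \<omega>)" for i \<omega>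
    unfolding w_def Wv_def by (simp add: inner_sum_right sum_distrib_left mult_ac)
  have fm: "(\<lambda>\<omega>. u t i \<omega> \<bullet> h t i k \<omega>) \<in> borel_measurable (FPI t)" for i k
    by (rule mv_inner[OF mv_u_FPI mv_h_FPI])
  have fi: "integrable M (\<lambda>\<omega>. u t i \<omega> \<bullet> h t i k \<omega>)" for i k
    by (rule int_inner[OF sqv_u bmv_sqv[OF bmv_h]])
  have z: "integral\<^sup>L M (\<lambda>\<omega>. (u t i \<omega> \<bullet> h t i k \<omega>) * v t i k \<omega>) = 0"
    and zi: "integrable M (\<lambda>\<omega>. (u t i \<omega> \<bullet> h t i k \<omega>) * v t i k \<omega>)" for i k
    using indep_mult[OF ind_PIN space_F(4,3) sets_F_sub(4,3) fm v_FN fi v_int] v_mean by auto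
  show ?thesis unfolding pw using zi by (simp add: Bochner_Integration.integral_sum z)
qed

lemma hh_int: "integral\<^sup>L M (\<lambda>\<omega>. h t i k \<omega> \<bullet> h t i k \<omega>) \<le> 2 * real CARD('m)"
proof -
  have "integral\<^sup>L M (\<lambda>\<omega>. h t i k \<omega> \<bullet> h t i k \<omega>) \<le> integral\<^sup>L M (\<lambda>\<omega>. 2 * real CARD('m))"
  proof (rule integral_mono)
    show "integrable M (\<lambda>\<omega>. h t i k \<omega> \<bullet> h t i k \<omega>)" by (rule int_inner[OF bmv_sqv[OF bmv_h] bmv_sqv[OF bmv_h]])
    show "integrable M (\<lambda>\<omega>. 2 * real CARD('m))" by simp
    fix \<omega> show "h t i k \<omega> \<bullet> h t i k \<omega> \<le> 2 * real CARD('m)"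
      using h_norm2[of t i k \<omega>] by (simp add: power2_norm_eq_inner)
  qed
  thus ?thesis by (simp add: prob_space)
qed

lemma IW: "integral\<^sup>L M (\<lambda>\<omega>. \<Sum>i\<in>UNIV. (norm (w t i \<omega>))^2)
    \<le> real CARD('n) * (\<alpha>^2 * \<sigma>v^2 * (2 * real CARD('m) * real CARD('c)))"
proof -
  have pw: "(norm (w t i \<omega>))^2 = \<alpha>^2 * (\<Sum>k\<in>UNIV. \<Sum>k'\<in>UNIV. (h t i k \<omega> \<bullet> h t i k' \<omega>) * (v t i k \<omega> * v t i k' \<omega>))" for i \<omega>
    unfolding w_def Wv_def power2_norm_eq_inner
    by (simp add: inner_sum_left inner_sum_right sum_distrib_left mult_ac power2_eq_square inner_commute)
  have fm: "(\<lambda>\<omega>. h t i k \<omega> \<bullet> h t i k' \<omega>) \<in> borel_measurable (FI t)" for i k k'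
    by (rule mv_inner[OF mv_h_FI mv_h_FI])
  have gm: "(\<lambda>\<omega>. v t i k \<omega> * v t i k' \<omega>) \<in> borel_measurable (FN t)" for i k k'
    using v_FN by (auto intro!: bms)
  have fi: "integrable M (\<lambda>\<omega>. h t i k \<omega> \<bullet> h t i k' \<omega>)" for i k k'
    by (rule int_inner[OF bmv_sqv[OF bmv_h] bmv_sqv[OF bmv_h]])
  have z: "integral\<^sup>L M (\<lambda>\<omega>. (h t i k \<omega> \<bullet> h t i k' \<omega>) * (v t i k \<omega> * v t i k' \<omega>))
      = integral\<^sup>L M (\<lambda>\<omega>. h t i k \<omega> \<bullet> h t i k' \<omega>) * (if k = k' then \<sigma>v^2 else 0)"
    and zi: "integrable M (\<lambda>\<omega>. (h t i k \<omega> \<bullet> h t i k' \<omega>) * (v t i k \<omega> * v t i k' \<omega>))" for i k k'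
    using indep_mult[OF ind_IN space_F(2,3) sets_F_sub(2,3) fm gm fi v_int2] v_cov by auto
  have per_i: "integral\<^sup>L M (\<lambda>\<omega>. (norm (w t i \<omega>))^2) \<le> \<alpha>^2 * \<sigma>v^2 * (2 * real CARD('m) * real CARD('c))" for i
  proof -
    have "integral\<^sup>L M (\<lambda>\<omega>. (norm (w t i \<omega>))^2)
        = \<alpha>^2 * (\<Sum>k\<in>UNIV. \<Sum>k'\<in>UNIV. integral\<^sup>L M (\<lambda>\<omega>. h t i k \<omega> \<bullet> h t i k' \<omega>) * (if k = k' then \<sigma>v^2 else 0))"
      unfolding pw using zi by (simp add: Bochner_Integration.integral_sum z)
    also have "\<dots> = \<alpha>^2 * (\<Sum>k\<in>UNIV. integral\<^sup>L M (\<lambda>\<omega>. h t i k \<omega> \<bullet> h t i k \<omega>) * \<sigma>v^2)"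
    proof -
      have "(\<Sum>k'\<in>UNIV. integral\<^sup>L M (\<lambda>\<omega>. h t i k \<omega> \<bullet> h t i k' \<omega>) * (if k = k' then \<sigma>v^2 else 0))
          = integral\<^sup>L M (\<lambda>\<omega>. h t i k \<omega> \<bullet> h t i k \<omega>) * \<sigma>v^2" for k
      proof -
        have "(\<Sum>k'\<in>UNIV. integral\<^sup>L M (\<lambda>\<omega>. h t i k \<omega> \<bullet> h t i k' \<omega>) * (if k = k' then \<sigma>v^2 else 0))
          = (\<Sum>k'\<in>UNIV. if k = k' then integral\<^sup>L M (\<lambda>\<omega>. h t i k \<omega> \<bullet> h t i k' \<omega>) * \<sigma>v^2 else 0)"
          by (rule sum.cong) auto
        thus ?thesis by simp
      qed
      thus ?thesis by simp
    qed
    also have "\<dots> \<le> \<alpha>^2 * (\<Sum>k\<in>(UNIV::'c set). 2 * real CARD('m) * \<sigma>v^2)"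
      by (intro mult_left_mono sum_mono mult_right_mono hh_int) auto
    also have "\<dots> = \<alpha>^2 * \<sigma>v^2 * (2 * real CARD('m) * real CARD('c))" by (simp add: mult_ac)
    finally show ?thesis .
  qed
  have wi: "integrable M (\<lambda>\<omega>. (norm (w t i \<omega>))^2)" for i by (rule int_norm2[OF sqv_w])
  have "integral\<^sup>L M (\<lambda>\<omega>. \<Sum>i\<in>UNIV. (norm (w t i \<omega>))^2) = (\<Sum>i\<in>UNIV. integral\<^sup>L M (\<lambda>\<omega>. (norm (w t i \<omega>))^2))"
    using wi by (simp add: Bochner_Integration.integral_sum)
  also have "\<dots> \<le> (\<Sum>i\<in>(UNIV::'n set). \<alpha>^2 * \<sigma>v^2 * (2 * real CARD('m) * real CARD('c)))"
    by (rule sum_mono[OF per_i])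
  also have "\<dots> = real CARD('n) * (\<alpha>^2 * \<sigma>v^2 * (2 * real CARD('m) * real CARD('c)))" by simp
  finally show ?thesis .
qed

lemma IR: "integral\<^sup>L M (\<lambda>\<omega>. \<Sum>i\<in>UNIV. (norm (r t i \<omega>))^2)
    \<le> (lam_max Lap + 2 * real CARD('m) * real CARD('c))^2 * integral\<^sup>L M (\<lambda>\<omega>. \<Sum>i\<in>UNIV. (norm (e t i \<omega>))^2)"
proof -
  have "integral\<^sup>L M (\<lambda>\<omega>. \<Sum>i\<in>UNIV. (norm (r t i \<omega>))^2)
     \<le> integral\<^sup>L M (\<lambda>\<omega>. (lam_max Lap + 2 * real CARD('m) * real CARD('c))^2 * (\<Sum>i\<in>UNIV. (norm (e t i \<omega>))^2))"
  proof (rule integral_mono)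
    show "integrable M (\<lambda>\<omega>. \<Sum>i\<in>UNIV. (norm (r t i \<omega>))^2)"
      by (intro Bochner_Integration.integrable_sum int_norm2 sqv_r)
    show "integrable M (\<lambda>\<omega>. (lam_max Lap + 2 * real CARD('m) * real CARD('c))^2 * (\<Sum>i\<in>UNIV. (norm (e t i \<omega>))^2))"
      by (intro integrable_mult_right Bochner_Integration.integrable_sum int_norm2 sqv_e)
    fix \<omega>
    show "(\<Sum>i\<in>UNIV. (norm (r t i \<omega>))^2) \<le> (lam_max Lap + 2 * real CARD('m) * real CARD('c))^2 * (\<Sum>i\<in>UNIV. (norm (e t i \<omega>))^2)"
      unfolding r_def by (rule R_bound[of "\<lambda>j. e t j \<omega>" t \<omega>])
  qed
  thus ?thesis by simp
qed

lemma IS: "lam_min (Bmat Lap (real CARD('c)) (Gmat M \<phi> feat X)) * integral\<^sup>L M (\<lambda>\<omega>. \<Sum>i\<in>UNIV. (norm (e t i \<omega>))^2)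
    \<le> integral\<^sup>L M (\<lambda>\<omega>. \<Sum>i\<in>UNIV. e t i \<omega> \<bullet> r t i \<omega>)"
proof -
  let ?B = "Bmat Lap (real CARD('c)) (Gmat M \<phi> feat X)"
  let ?G = "Gmat M \<phi> feat X"
  define QB where "QB \<omega> = (\<Sum>i\<in>UNIV. e t i \<omega> \<bullet> Lop Lap (\<lambda>j. e t j \<omega>) i) + real CARD('c) * (\<Sum>i\<in>UNIV. e t i \<omega> \<bullet> (?G i *v e t i \<omega>))" for \<omega>
  have QBeq: "QB \<omega> = qf ?B (stack (\<lambda>i. e t i \<omega>))" for \<omega>
    unfolding QB_def qf_Bmat sum_inner_Lop ..
  have i1: "integrable M (\<lambda>\<omega>. \<Sum>i\<in>UNIV. e t i \<omega> \<bullet> Lop Lap (\<lambda>j. e t j \<omega>) i)"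
    by (intro Bochner_Integration.integrable_sum int_inner sqv_e sqv_Lp)
  have i2: "integrable M (\<lambda>\<omega>. e t i \<omega> \<bullet> (?G i *v e t i \<omega>))" for i
    by (intro int_inner sqv_e sqv_matvec)
  have i3: "integrable M (\<lambda>\<omega>. e t i \<omega> \<bullet> Dm t i \<omega> (e t i \<omega>))" for i
    by (intro int_inner sqv_e sqv_Dd)
  have QBi: "integrable M QB" unfolding QB_def using i1 i2 by simp
  have "integral\<^sup>L M (\<lambda>\<omega>. \<Sum>i\<in>UNIV. e t i \<omega> \<bullet> r t i \<omega>)
      = integral\<^sup>L M (\<lambda>\<omega>. (\<Sum>i\<in>UNIV. e t i \<omega> \<bullet> Lop Lap (\<lambda>j. e t j \<omega>) i) + (\<Sum>i\<in>UNIV. e t i \<omega> \<bullet> Dm t i \<omega> (e t i \<omega>)))"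
    unfolding r_def inner_add_right sum.distrib ..
  also have "\<dots> = integral\<^sup>L M (\<lambda>\<omega>. \<Sum>i\<in>UNIV. e t i \<omega> \<bullet> Lop Lap (\<lambda>j. e t j \<omega>) i)
      + (\<Sum>i\<in>UNIV. integral\<^sup>L M (\<lambda>\<omega>. e t i \<omega> \<bullet> Dm t i \<omega> (e t i \<omega>)))"
    using i1 i3 by (simp add: Bochner_Integration.integral_sum)
  also have "\<dots> = integral\<^sup>L M (\<lambda>\<omega>. \<Sum>i\<in>UNIV. e t i \<omega> \<bullet> Lop Lap (\<lambda>j. e t j \<omega>) i)
      + (\<Sum>i\<in>UNIV. integral\<^sup>L M (\<lambda>\<omega>. real CARD('c) * (e t i \<omega> \<bullet> (?G i *v e t i \<omega>))))"
    by (simp only: KD)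
  also have "\<dots> = integral\<^sup>L M QB"
    unfolding QB_def using i1 i2 by (simp add: Bochner_Integration.integral_sum sum_distrib_left)
  finally have eq: "integral\<^sup>L M (\<lambda>\<omega>. \<Sum>i\<in>UNIV. e t i \<omega> \<bullet> r t i \<omega>) = integral\<^sup>L M QB" .
  have "lam_min ?B * integral\<^sup>L M (\<lambda>\<omega>. \<Sum>i\<in>UNIV. (norm (e t i \<omega>))^2)
      = integral\<^sup>L M (\<lambda>\<omega>. lam_min ?B * (\<Sum>i\<in>UNIV. (norm (e t i \<omega>))^2))" by simp
  also have "\<dots> \<le> integral\<^sup>L M QB"
  proof (rule integral_mono[OF _ QBi])
    show "integrable M (\<lambda>\<omega>. lam_min ?B * (\<Sum>i\<in>UNIV. (norm (e t i \<omega>))^2))"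
      by (intro integrable_mult_right Bochner_Integration.integrable_sum int_norm2 sqv_e)
    fix \<omega>
    have "lam_min ?B * (norm (stack (\<lambda>i. e t i \<omega>)))^2 \<le> qf ?B (stack (\<lambda>i. e t i \<omega>))"
      by (rule lam_min_le[OF B_sym])
    thus "lam_min ?B * (\<Sum>i\<in>UNIV. (norm (e t i \<omega>))^2) \<le> QB \<omega>"
      unfolding QBeq norm_stack .
  qed
  finally show ?thesis unfolding eq .
qed

end

lemma limsup_rec:
  fixes a :: "nat \<Rightarrow> real"
  assumes rec: "\<And>t. a (Suc t) \<le> \<rho> * a t + N" and r0: "0 \<le> \<rho>" and r1: "\<rho> < 1"
  shows "limsup (\<lambda>t. ennreal (a t)) \<le> ennreal (N / (1 - \<rho>))"
proof -
  define c where "c = N / (1 - \<rho>)"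
  define B where "B = max (a 0 - c) 0"
  have cN: "\<rho> * c + N = c" unfolding c_def using r1 by (simp add: field_simps)
  have bnd: "a t \<le> c + \<rho>^t * B" for t
  proof (induction t)
    case 0 thus ?case unfolding B_def by simp
  next
    case (Suc t)
    have "a (Suc t) \<le> \<rho> * a t + N" by (rule rec)
    also have "\<dots> \<le> \<rho> * (c + \<rho>^t * B) + N" by (rule add_right_mono[OF mult_left_mono[OF Suc r0]])
    also have "\<dots> = c + \<rho>^Suc t * B" using cN by (simp add: algebra_simps)
    finally show ?case .
  qed
  have lim: "(\<lambda>t. ennreal (c + \<rho>^t * B)) \<longlonglongrightarrow> ennreal c"
  proof (rule tendsto_ennrealI)
    have nr: "norm \<rho> < 1" using r0 r1 by simp
    have p: "(\<lambda>t. \<rho>^t) \<longlonglongrightarrow> 0" by (rule LIMSEQ_power_zero[OF nr])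
    have "(\<lambda>t. c + \<rho>^t * B) \<longlonglongrightarrow> c + 0 * B" by (rule tendsto_add[OF tendsto_const tendsto_mult[OF p tendsto_const]])
    thus "(\<lambda>t. c + \<rho>^t * B) \<longlonglongrightarrow> c" by simp
  qed
  have "limsup (\<lambda>t. ennreal (a t)) \<le> limsup (\<lambda>t. ennreal (c + \<rho>^t * B))"
    by (rule Limsup_mono, rule always_eventually, intro allI ennreal_leI bnd)
  also have "\<dots> = ennreal c" by (rule lim_imp_Limsup[OF trivial_limit_sequentially lim])
  finally show ?thesis unfolding c_def .
qed

context dset begin

lemma step:
  "integral\<^sup>L M (\<lambda>\<omega>. \<Sum>i\<in>UNIV. (norm (e (Suc t) i \<omega>))^2)
    \<le> (1 - 2 * \<alpha> * lam_min (Bmat Lap (real CARD('c)) (Gmat M \<phi> feat X))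
         + \<alpha>^2 * (lam_max Lap + 2 * real CARD('m) * real CARD('c))^2) * integral\<^sup>L M (\<lambda>\<omega>. \<Sum>i\<in>UNIV. (norm (e t i \<omega>))^2)
      + real CARD('n) * (\<alpha>^2 * \<sigma>v^2 * (2 * real CARD('m) * real CARD('c)))"
proof -
  let ?lam = "lam_min (Bmat Lap (real CARD('c)) (Gmat M \<phi> feat X))"
  let ?K = "lam_max Lap + 2 * real CARD('m) * real CARD('c)"
  define IA where "IA = integral\<^sup>L M (\<lambda>\<omega>. \<Sum>i\<in>UNIV. (norm (e t i \<omega>))^2)"
  define IS where "IS = integral\<^sup>L M (\<lambda>\<omega>. \<Sum>i\<in>UNIV. e t i \<omega> \<bullet> r t i \<omega>)"
  define IR where "IR = integral\<^sup>L M (\<lambda>\<omega>. \<Sum>i\<in>UNIV. (norm (r t i \<omega>))^2)"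
  define IC where "IC = integral\<^sup>L M (\<lambda>\<omega>. \<Sum>i\<in>UNIV. u t i \<omega> \<bullet> w t i \<omega>)"
  define IW where "IW = integral\<^sup>L M (\<lambda>\<omega>. \<Sum>i\<in>UNIV. (norm (w t i \<omega>))^2)"
  have iA: "integrable M (\<lambda>\<omega>. \<Sum>i\<in>UNIV. (norm (e t i \<omega>))^2)"
    by (intro Bochner_Integration.integrable_sum int_norm2 sqv_e)
  have iS: "integrable M (\<lambda>\<omega>. \<Sum>i\<in>UNIV. e t i \<omega> \<bullet> r t i \<omega>)"
    by (intro Bochner_Integration.integrable_sum int_inner sqv_e sqv_r)
  have iR: "integrable M (\<lambda>\<omega>. \<Sum>i\<in>UNIV. (norm (r t i \<omega>))^2)"
    by (intro Bochner_Integration.integrable_sum int_norm2 sqv_r)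
  have iC: "integrable M (\<lambda>\<omega>. \<Sum>i\<in>UNIV. u t i \<omega> \<bullet> w t i \<omega>)"
    by (intro Bochner_Integration.integrable_sum int_inner sqv_u sqv_w)
  have iW: "integrable M (\<lambda>\<omega>. \<Sum>i\<in>UNIV. (norm (w t i \<omega>))^2)"
    by (intro Bochner_Integration.integrable_sum int_norm2 sqv_w)
  have "integral\<^sup>L M (\<lambda>\<omega>. \<Sum>i\<in>UNIV. (norm (e (Suc t) i \<omega>))^2) = IA - 2 * \<alpha> * IS + \<alpha>^2 * IR + 2 * IC + IW"
    unfolding pw IA_def IS_def IR_def IC_def IW_def using iA iS iR iC iW by simp
  also have "\<dots> \<le> IA - 2 * \<alpha> * (?lam * IA) + \<alpha>^2 * (?K^2 * IA) + 2 * 0 + real CARD('n) * (\<alpha>^2 * \<sigma>v^2 * (2 * real CARD('m) * real CARD('c)))"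
  proof -
    have "?lam * IA \<le> IS" unfolding IA_def IS_def by (rule IS)
    hence a: "2 * \<alpha> * (?lam * IA) \<le> 2 * \<alpha> * IS" using alpha_pos by simp
    have "IR \<le> ?K^2 * IA" unfolding IR_def IA_def by (rule IR)
    hence b: "\<alpha>^2 * IR \<le> \<alpha>^2 * (?K^2 * IA)" by (rule mult_left_mono) simp
    have c: "IC = 0" unfolding IC_def by (rule IC)
    have d: "IW \<le> real CARD('n) * (\<alpha>^2 * \<sigma>v^2 * (2 * real CARD('m) * real CARD('c)))" unfolding IW_def by (rule IW)
    show ?thesis using a b c d by linarith
  qed
  also have "\<dots> = (1 - 2 * \<alpha> * ?lam + \<alpha>^2 * ?K^2) * IA + real CARD('n) * (\<alpha>^2 * \<sigma>v^2 * (2 * real CARD('m) * real CARD('c)))"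
    by (simp add: algebra_simps)
  finally show ?thesis unfolding IA_def .
qed

lemma sum_delta_mult: "(\<Sum>k\<in>(UNIV::'k::finite set). (f k :: real) * (if k = i then 1 else 0)) = f i"
proof -
  have "(\<Sum>k\<in>(UNIV::'k::finite set). (f k :: real) * (if k = i then 1 else 0)) = (\<Sum>k\<in>UNIV. if k = i then f k else 0)"
    by (rule sum.cong) auto
  thus ?thesis by simp
qed

lemma qf_axis: "qf A (axis i 1) = (A :: real^'k^'k) $ i $ i"
proof -
  have c: "(A *v axis i 1) $ j = A $ j $ i" for j
    unfolding matrix_vector_mult_def axis_def vec_lambda_beta by (rule sum_delta_mult)
  have "qf A (axis i 1) = (\<Sum>j\<in>UNIV. (A *v axis i 1) $ j * (axis i 1 :: real^'k) $ j)"
    unfolding qf_def inner_vec_sum by (simp add: mult.commute)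
  also have "\<dots> = (\<Sum>j\<in>UNIV. A $ j $ i * (axis i 1 :: real^'k) $ j)" unfolding c ..
  also have "\<dots> = A $ i $ i" unfolding axis_def vec_lambda_beta by (rule sum_delta_mult)
  finally show ?thesis .
qed

lemma G_diag: "Gmat M \<phi> feat X i $ l $ l \<le> 2"
proof -
  have "integral\<^sup>L M (\<lambda>\<omega>. \<Sum>k\<in>UNIV. \<phi> (X 0 i k \<omega>) (feat l) * \<phi> (X 0 i k \<omega>) (feat l)) \<le> integral\<^sup>L M (\<lambda>\<omega>. 2 * real CARD('c))"
  proof (rule integral_mono)
    have "bm (\<lambda>\<omega>. \<Sum>k\<in>UNIV. h 0 i k \<omega> $ l * h 0 i k \<omega> $ l)"
      using bmv_h unfolding bmv_def by (intro bm_sum bm_mult) auto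
    thus "integrable M (\<lambda>\<omega>. \<Sum>k\<in>UNIV. \<phi> (X 0 i k \<omega>) (feat l) * \<phi> (X 0 i k \<omega>) (feat l))"
      unfolding h_comp by (rule bm_int)
    show "integrable M (\<lambda>\<omega>. 2 * real CARD('c))" by simp
    fix \<omega>
    have "(\<Sum>k\<in>UNIV. \<phi> (X 0 i k \<omega>) (feat l) * \<phi> (X 0 i k \<omega>) (feat l)) \<le> (\<Sum>k\<in>(UNIV::'c set). 2)"
    proof (rule sum_mono)
      fix k
      have "\<bar>\<phi> (X 0 i k \<omega>) (feat l)\<bar>^2 \<le> (sqrt 2)^2" by (rule power_mono[OF phi_bound]) simp
      thus "\<phi> (X 0 i k \<omega>) (feat l) * \<phi> (X 0 i k \<omega>) (feat l) \<le> 2" by (simp add: power2_eq_square)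
    qed
    thus "(\<Sum>k\<in>UNIV. \<phi> (X 0 i k \<omega>) (feat l) * \<phi> (X 0 i k \<omega>) (feat l)) \<le> 2 * real CARD('c)" by simp
  qed
  hence "integral\<^sup>L M (\<lambda>\<omega>. \<Sum>k\<in>UNIV. \<phi> (X 0 i k \<omega>) (feat l) * \<phi> (X 0 i k \<omega>) (feat l)) \<le> 2 * real CARD('c)"
    by (simp add: prob_space)
  thus ?thesis unfolding Gmat_def by (simp add: field_simps)
qed

lemma lam_le_K: "lam_min (Bmat Lap (real CARD('c)) (Gmat M \<phi> feat X)) \<le> lam_max Lap + 2 * real CARD('m) * real CARD('c)"
proof -
  obtain i :: 'n and l :: 'm where True by blast
  let ?B = "Bmat Lap (real CARD('c)) (Gmat M \<phi> feat X)"
  have "lam_min ?B * (norm (axis (i,l) (1::real)))^2 \<le> qf ?B (axis (i,l) 1)" by (rule lam_min_le[OF B_sym])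
  hence "lam_min ?B \<le> ?B $ (i,l) $ (i,l)" by (simp add: qf_axis)
  also have "\<dots> = Lap $ i $ i + real CARD('c) * Gmat M \<phi> feat X i $ l $ l" by (simp add: Bmat_def)
  also have "Lap $ i $ i \<le> lam_max Lap"
    using lam_max_ge[OF Lap_sym, of "axis i 1"] by (simp add: qf_axis)
  also have "real CARD('c) * Gmat M \<phi> feat X i $ l $ l \<le> real CARD('c) * 2"
    by (rule mult_left_mono[OF G_diag]) simp
  also have "lam_max Lap + real CARD('c) * 2 \<le> lam_max Lap + 2 * real CARD('m) * real CARD('c)"
  proof -
    have "1 \<le> real CARD('m)" by simp
    hence "real CARD('c) * 2 * 1 \<le> real CARD('c) * 2 * real CARD('m)" by (intro mult_left_mono) auto
    thus ?thesis by (simp add: mult_ac)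
  qed
  finally show ?thesis by simp
qed

end

theorem theorem1:
  fixes M :: "'a measure"
    and \<phi> :: "real^'d \<Rightarrow> real^'d \<Rightarrow> real"
    and feat :: "'m::finite \<Rightarrow> real^'d"
    and \<theta> :: "real^'m"
    and \<theta>0 :: "'n::finite \<Rightarrow> 'a \<Rightarrow> real^'m"
    and X :: "nat \<Rightarrow> 'n \<Rightarrow> 'c::finite \<Rightarrow> 'a \<Rightarrow> real^'d"
    and v :: "nat \<Rightarrow> 'n \<Rightarrow> 'c \<Rightarrow> 'a \<Rightarrow> real"
    and \<sigma>v :: real
    and E :: "'n \<Rightarrow> 'n \<Rightarrow> bool"
    and \<alpha> :: real
  assumes prob: "prob_space M"
    and phi_bound: "\<And>x w. \<bar>\<phi> x w\<bar> \<le> sqrt 2"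
    and phi_meas: "\<And>w. (\<lambda>x. \<phi> x w) \<in> borel_measurable borel"
    and theta0_rv: "\<And>i. \<theta>0 i \<in> borel_measurable M"
    and theta0_L2: "\<And>i. integrable M (\<lambda>\<omega>. (norm (\<theta>0 i \<omega>))\<^sup>2)"
    and X_rv: "\<And>t i k. X t i k \<in> borel_measurable M"
    and X_stationary: "\<And>t. distr M (PiM UNIV (\<lambda>_. borel)) (\<lambda>\<omega> p. X t (fst p) (snd p) \<omega>)
                          = distr M (PiM UNIV (\<lambda>_. borel)) (\<lambda>\<omega> p. X 0 (fst p) (snd p) \<omega>)"
    and v_rv: "\<And>t i k. v t i k \<in> borel_measurable M"
    and v_int: "\<And>t i k. integrable M (v t i k)"
    and v_mean: "\<And>t i k. integral\<^sup>L M (v t i k) = 0"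
    and v_int2: "\<And>t i k k'. integrable M (\<lambda>\<omega>. v t i k \<omega> * v t i k' \<omega>)"
    and v_cov: "\<And>t i k k'. integral\<^sup>L M (\<lambda>\<omega>. v t i k \<omega> * v t i k' \<omega>)
                             = (if k = k' then \<sigma>v\<^sup>2 else 0)"
    and indep: "\<And>t. prob_space.indep_sets M
                  (\<lambda>b::nat. if b = 0 then past_events M \<theta>0 X v t
                            else if b = 1 then input_events M X t
                            else noise_events M v t) {0, 1, 2}"
    and E_sym: "\<And>i j. E i j = E j i"
    and E_irrefl: "\<And>i. \<not> E i i"
    and E_conn: "connected_graph E"
    and alpha_pos: "0 < \<alpha>"
    and alpha_deg: "\<alpha> < 1 / real (max_degree E)"
    and G_rank: "\<And>i. rank (Gmat M \<phi> feat X i) < CARD('m)"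
    and G_sum_inv: "invertible (\<Sum>i\<in>UNIV. Gmat M \<phi> feat X i)"
    and alpha_small: "\<alpha> < 2 * lam_min (Bmat (laplacian E) (real CARD('c)) (Gmat M \<phi> feat X))
                          / (lam_max (laplacian E) + 2 * real CARD('m) * real CARD('c))\<^sup>2"
  shows "limsup (\<lambda>t. \<integral>\<^sup>+ \<omega>. ennreal (\<Sum>i\<in>UNIV.
             (norm (est (mat 1 - \<alpha> *\<^sub>R laplacian E) \<alpha> \<phi> feat \<theta> \<theta>0 X v t i \<omega> - \<theta>))\<^sup>2) \<partial>M)
         \<le> ennreal (2 * \<alpha> * real CARD('c) * real CARD('m) * real CARD('n) * \<sigma>v\<^sup>2
               / (2 * lam_min (Bmat (laplacian E) (real CARD('c)) (Gmat M \<phi> feat X))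
                  - \<alpha> * (lam_max (laplacian E) + 2 * real CARD('m) * real CARD('c))\<^sup>2))"
proof -
  interpret d: dset M \<phi> feat \<theta> \<theta>0 X v \<sigma>v E \<alpha>
    by (rule dset.intro[OF prob dset_axioms.intro]) (rule assms; assumption)+
  let ?lam = "lam_min (Bmat (laplacian E) (real CARD('c)) (Gmat M \<phi> feat X))"
  let ?K = "lam_max (laplacian E) + 2 * real CARD('m) * real CARD('c)"
  define a where "a t = integral\<^sup>L M (\<lambda>\<omega>. \<Sum>i\<in>UNIV. (norm (d.e t i \<omega>))^2)" for t
  define \<rho> where "\<rho> = 1 - 2 * \<alpha> * ?lam + \<alpha>^2 * ?K^2"
  define N where "N = real CARD('n) * (\<alpha>^2 * \<sigma>v^2 * (2 * real CARD('m) * real CARD('c)))"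
  have est_eq: "est (mat 1 - \<alpha> *\<^sub>R laplacian E) \<alpha> \<phi> feat \<theta> \<theta>0 X v t i \<omega> - \<theta> = d.e t i \<omega>" for t i \<omega>
    by (simp add: d.e_def d.est'_def d.Pm_def)
  have nn: "(\<integral>\<^sup>+ \<omega>. ennreal (\<Sum>i\<in>UNIV. (norm (est (mat 1 - \<alpha> *\<^sub>R laplacian E) \<alpha> \<phi> feat \<theta> \<theta>0 X v t i \<omega> - \<theta>))\<^sup>2) \<partial>M)
      = ennreal (a t)" for t
    unfolding est_eq a_def
    by (rule nn_integral_eq_integral) (auto intro!: Bochner_Integration.integrable_sum d.int_norm2 d.sqv_e AE_I2 sum_nonneg)
  have rec: "a (Suc t) \<le> \<rho> * a t + N" for t
    unfolding a_def \<rho>_def N_def using d.step[of t] by simp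
  have K0: "0 \<le> lam_max (laplacian E)" by (rule d.lam1_nonneg)
  have Kpos: "0 < ?K" using K0 by (simp add: add_nonneg_pos)
  have lamK: "?lam \<le> ?K" by (rule d.lam_le_K)
  have aK: "\<alpha> * ?K^2 < 2 * ?lam"
    using alpha_small Kpos by (simp add: pos_less_divide_eq)
  have r0: "0 \<le> \<rho>"
  proof -
    have "2 * \<alpha> * ?lam \<le> 2 * \<alpha> * ?K" using lamK alpha_pos by simp
    moreover have "0 \<le> (1 - \<alpha> * ?K)^2" by simp
    ultimately show ?thesis unfolding \<rho>_def by (simp add: power2_eq_square algebra_simps)
  qed
  have r1: "\<rho> < 1"
  proof -
    have "\<alpha> * (\<alpha> * ?K^2) < \<alpha> * (2 * ?lam)" using aK alpha_pos by simp
    thus ?thesis unfolding \<rho>_def by (simp add: power2_eq_square algebra_simps)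
  qed
  have "limsup (\<lambda>t. ennreal (a t)) \<le> ennreal (N / (1 - \<rho>))"
    by (rule limsup_rec[where a=a, OF rec r0 r1])
  also have "N / (1 - \<rho>) = 2 * \<alpha> * real CARD('c) * real CARD('m) * real CARD('n) * \<sigma>v\<^sup>2
               / (2 * ?lam - \<alpha> * ?K\<^sup>2)"
  proof -
    define D where "D = 2 * ?lam - \<alpha> * ?K\<^sup>2"
    define Y where "Y = 2 * \<alpha> * real CARD('c) * real CARD('m) * real CARD('n) * \<sigma>v\<^sup>2"
    have e1: "1 - \<rho> = \<alpha> * D" unfolding \<rho>_def D_def by (simp add: power2_eq_square algebra_simps)
    have e2: "N = \<alpha> * Y" unfolding N_def Y_def by (simp add: power2_eq_square mult_ac)
    have "N / (1 - \<rho>) = (\<alpha> * Y) / (\<alpha> * D)" unfolding e1 e2 ..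
    also have "\<dots> = Y / D" using alpha_pos by simp
    finally show ?thesis unfolding Y_def D_def .
  qed
  finally show ?thesis unfolding nn .
qed

end
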